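(* Let $F$ be a forest and $\alpha:V(F)\to\mathbb{N}$. Suppose $X_{F^\alpha}$ is not 2-$s$-positive, and that $T$ is the unique connected component of $F^\alpha$ with $X_T$ not 2-$s$-positive. If $T$ is bipartite with bipartition class sizes $(r+2,r)$ for some $r\ge1$, then $F^\alpha$ has no isolated vertices.
   Context: Clan graph $F^\alpha$: replace each vertex $v$ by a clique $K_{\alpha(v)}$ and join all vertices of the cliques of adjacent vertices. $X_H$ is Stanley's chromatic symmetric function of a graph $H$: $X_H=\sum_\kappa\prod_{v}x_{\kappa(v)}$ over proper colorings $\kappa:V(H)\to\mathbb{Z}_{>0}$. A symmetric function $f$ is 2-$s$-positive if $[s_\lambda]f\ge0$ for all partitions $\lambda$ with at most two parts ($s_\lambda$ Schur functions). *)

theory Defs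
  imports Main "HOL-Library.FuncSet"
begin

text \<open>A finite simple graph is a finite vertex set V together with a symmetric,
irreflexive adjacency relation E (only its restriction to V matters).\<close>

definition simple_graph :: "'a set \<Rightarrow> ('a \<Rightarrow> 'a \<Rightarrow> bool) \<Rightarrow> bool" where
  "simple_graph V E \<longleftrightarrow> finite V \<and> (\<forall>u\<in>V. \<forall>v\<in>V. E u v \<longrightarrow> E v u) \<and> (\<forall>v\<in>V. \<not> E v v)"

definition is_cycle :: "'a set \<Rightarrow> ('a \<Rightarrow> 'a \<Rightarrow> bool) \<Rightarrow> 'a list \<Rightarrow> bool" where
  "is_cycle V E cs \<longleftrightarrow> length cs \<ge> 3 \<and> distinct cs \<and> set cs \<subseteq> V
     \<and> (\<forall>i. Suc i < length cs \<longrightarrow> E (cs ! i) (cs ! Suc i))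
     \<and> E (last cs) (hd cs)"

definition forest :: "'a set \<Rightarrow> ('a \<Rightarrow> 'a \<Rightarrow> bool) \<Rightarrow> bool" where
  "forest V E \<longleftrightarrow> simple_graph V E \<and> (\<nexists>cs. is_cycle V E cs)"

definition reachable :: "'a set \<Rightarrow> ('a \<Rightarrow> 'a \<Rightarrow> bool) \<Rightarrow> 'a \<Rightarrow> 'a \<Rightarrow> bool" where
  "reachable V E = (\<lambda>u v. u \<in> V \<and> v \<in> V \<and> E u v)\<^sup>*\<^sup>*"

definition is_component :: "'a set \<Rightarrow> ('a \<Rightarrow> 'a \<Rightarrow> bool) \<Rightarrow> 'a set \<Rightarrow> bool" where
  "is_component V E C \<longleftrightarrow> (\<exists>x\<in>V. C = {y\<in>V. reachable V E x y})"

definition bipartite_classes :: "'a set \<Rightarrow> ('a \<Rightarrow> 'a \<Rightarrow> bool) \<Rightarrow> 'a set \<Rightarrow> 'a set \<Rightarrow> bool" where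
  "bipartite_classes V E A B \<longleftrightarrow> A \<union> B = V \<and> A \<inter> B = {}
     \<and> (\<forall>u\<in>A. \<forall>v\<in>A. \<not> E u v) \<and> (\<forall>u\<in>B. \<forall>v\<in>B. \<not> E u v)"

definition isolated_vertex :: "'a set \<Rightarrow> ('a \<Rightarrow> 'a \<Rightarrow> bool) \<Rightarrow> 'a \<Rightarrow> bool" where
  "isolated_vertex V E v \<longleftrightarrow> v \<in> V \<and> (\<forall>u\<in>V. \<not> E v u)"

text \<open>F^alpha: vertex v is replaced by the clique on {(v,0),...,(v,alpha v - 1)};
two copies are adjacent iff they come from the same vertex (and differ) or from
adjacent vertices.\<close>
definition clan_vertices :: "'a set \<Rightarrow> ('a \<Rightarrow> nat) \<Rightarrow> ('a \<times> nat) set" where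
  "clan_vertices V \<alpha> = {(v, i). v \<in> V \<and> i < \<alpha> v}"

definition clan_edges :: "('a \<Rightarrow> 'a \<Rightarrow> bool) \<Rightarrow> ('a \<times> nat) \<Rightarrow> ('a \<times> nat) \<Rightarrow> bool" where
  "clan_edges E = (\<lambda>(v, i) (w, j). (v = w \<and> i \<noteq> j) \<or> E v w)"

text \<open>A (homogeneous) symmetric function in the variables x_0, x_1, ... is represented
by its coefficient function on exponent vectors (finitely supported functions
nat => nat): f e is the coefficient of the monomial prod_i x_i^(e i).
(Variables are indexed from 0 instead of 1.)\<close>

type_synonym symfun = "(nat \<Rightarrow> nat) \<Rightarrow> int"

definition fin_supp :: "(nat \<Rightarrow> nat) \<Rightarrow> bool" where
  "fin_supp e \<longleftrightarrow> finite {i. e i \<noteq> 0}"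

text \<open>Stanley's chromatic symmetric function: the coefficient of x^e is the number
of proper colourings kappa : V -> colours whose colour class of i has size e i.\<close>
definition proper_colouring :: "'a set \<Rightarrow> ('a \<Rightarrow> 'a \<Rightarrow> bool) \<Rightarrow> ('a \<Rightarrow> nat) \<Rightarrow> bool" where
  "proper_colouring V E \<kappa> \<longleftrightarrow> (\<forall>u\<in>V. \<forall>v\<in>V. E u v \<longrightarrow> \<kappa> u \<noteq> \<kappa> v)"

definition chromatic_sym :: "'a set \<Rightarrow> ('a \<Rightarrow> 'a \<Rightarrow> bool) \<Rightarrow> symfun" where
  "chromatic_sym V E e = int (card {\<kappa> \<in> V \<rightarrow>\<^sub>E UNIV. proper_colouring V E \<kappa>
        \<and> (\<forall>i. card {v\<in>V. \<kappa> v = i} = e i)})"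

definition is_partition :: "nat list \<Rightarrow> bool" where
  "is_partition la \<longleftrightarrow> sorted_wrt (\<ge>) la \<and> (\<forall>x\<in>set la. 0 < x)"

definition young_diagram :: "nat list \<Rightarrow> (nat \<times> nat) set" where
  "young_diagram la = {(i, j). i < length la \<and> j < la ! i}"

definition ssyt :: "nat list \<Rightarrow> (nat \<Rightarrow> nat) \<Rightarrow> ((nat \<times> nat) \<Rightarrow> nat) set" where
  "ssyt la e = {T \<in> young_diagram la \<rightarrow>\<^sub>E UNIV.
      (\<forall>i j. (i, Suc j) \<in> young_diagram la \<longrightarrow> T (i, j) \<le> T (i, Suc j))
    \<and> (\<forall>i j. (Suc i, j) \<in> young_diagram la \<longrightarrow> T (i, j) < T (Suc i, j))
    \<and> (\<forall>k. card {c \<in> young_diagram la. T c = k} = e k)}"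

text \<open>Kostka number = coefficient of x^e in the Schur function s_lambda.\<close>
definition kostka :: "nat list \<Rightarrow> (nat \<Rightarrow> nat) \<Rightarrow> int" where
  "kostka la e = int (card (ssyt la e))"

definition partitions_of :: "nat \<Rightarrow> nat list set" where
  "partitions_of n = {la. is_partition la \<and> sum_list la = n}"

definition schur_expansion :: "nat \<Rightarrow> symfun \<Rightarrow> (nat list \<Rightarrow> int) \<Rightarrow> bool" where
  "schur_expansion n f c \<longleftrightarrow> (\<forall>la. la \<notin> partitions_of n \<longrightarrow> c la = 0)
     \<and> (\<forall>e. fin_supp e \<longrightarrow> f e = (\<Sum>la\<in>partitions_of n. c la * kostka la e))"

definition schur_coeff :: "nat \<Rightarrow> symfun \<Rightarrow> nat list \<Rightarrow> int" where
  "schur_coeff n f = (THE c. schur_expansion n f c)"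

definition two_s_positive :: "nat \<Rightarrow> symfun \<Rightarrow> bool" where
  "two_s_positive n f \<longleftrightarrow>
     (\<forall>la. is_partition la \<and> length la \<le> 2 \<longrightarrow> schur_coeff n f la \<ge> 0)"

definition chrom_two_s_positive :: "'a set \<Rightarrow> ('a \<Rightarrow> 'a \<Rightarrow> bool) \<Rightarrow> bool" where
  "chrom_two_s_positive V E \<longleftrightarrow> two_s_positive (card V) (chromatic_sym V E)"

end

theory Submission
  imports Defs "HOL-Combinatorics.Permutations"
begin

section \<open>Young diagrams and tableaux: basics\<close>

lemma yd_mem: "(r,c) \<in> young_diagram la \<longleftrightarrow> r < length la \<and> c < la!r"
  by (simp add: young_diagram_def)

lemma yd_Sigma: "young_diagram la = Sigma {..<length la} (\<lambda>r. {..<la!r})"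
  by (auto simp: young_diagram_def)

lemma finite_yd[simp]: "finite (young_diagram la)"
  unfolding yd_Sigma by auto

lemma partition_mono: "is_partition la \<Longrightarrow> r \<le> s \<Longrightarrow> s < length la \<Longrightarrow> la!s \<le> la!r"
  unfolding is_partition_def
  by (metis le_eq_less_or_eq order_refl sorted_wrt_nth_less)

lemma partition_pos: "is_partition la \<Longrightarrow> r < length la \<Longrightarrow> 0 < la!r"
  unfolding is_partition_def by auto

lemma yd_up: "is_partition la \<Longrightarrow> (Suc r, c) \<in> young_diagram la \<Longrightarrow> (r,c) \<in> young_diagram la"
  unfolding yd_mem using partition_mono[of la r "Suc r"] by auto

lemma yd_left: "(r, Suc c) \<in> young_diagram la \<Longrightarrow> (r,c) \<in> young_diagram la"
  unfolding yd_mem by auto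

lemma ssytD:
  assumes "T \<in> ssyt la e"
  shows "T \<in> young_diagram la \<rightarrow>\<^sub>E UNIV"
    "\<And>i j. (i, Suc j) \<in> young_diagram la \<Longrightarrow> T (i, j) \<le> T (i, Suc j)"
    "\<And>i j. (Suc i, j) \<in> young_diagram la \<Longrightarrow> T (i, j) < T (Suc i, j)"
    "\<And>k. card {c \<in> young_diagram la. T c = k} = e k"
  using assms unfolding ssyt_def by auto

lemma ssyt_row_mono:
  assumes "T \<in> ssyt la e" "(r,c') \<in> young_diagram la" "c \<le> c'"
  shows "T (r,c) \<le> T (r,c')"
  using assms(3,2)
proof (induction c' rule: dec_induct)
  case base then show ?case by simp
next
  case (step m)
  then have "(r, m) \<in> young_diagram la" using yd_left by blast
  then show ?case using step ssytD(2)[OF assms(1) step(4)] by simp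
qed

lemma ssyt_ge_row:
  assumes "is_partition la" "T \<in> ssyt la e" "(r,c) \<in> young_diagram la"
  shows "r \<le> T (r,c)"
  using assms(3)
proof (induction r)
  case 0 then show ?case by simp
next
  case (Suc r)
  then have "(r,c) \<in> young_diagram la" using yd_up[OF assms(1)] by blast
  then show ?case using Suc ssytD(3)[OF assms(2) Suc(2)] by simp
qed

definition pc :: "nat list \<Rightarrow> nat \<Rightarrow> nat" where
  "pc la k = (if k < length la then la!k else 0)"

lemma sum_take_nth: "sum_list (take j xs) = (\<Sum>r<min j (length xs). xs!r)"
  by (simp add: sum_list_sum_nth atLeast0LessThan min.commute)

lemma sum_pc: "(\<Sum>k<j. pc la k) = sum_list (take j la)"
proof -
  have "(\<Sum>k<j. pc la k) = (\<Sum>k<min j (length la). la!k)"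
    by (rule sum.mono_neutral_cong_right) (auto simp: pc_def)
  then show ?thesis by (simp add: sum_take_nth)
qed

lemma card_yd_rows: "card {x \<in> young_diagram la. fst x < j} = sum_list (take j la)"
proof -
  have "{x \<in> young_diagram la. fst x < j} = Sigma {..<min j (length la)} (\<lambda>r. {..<la!r})"
    by (auto simp: young_diagram_def)
  then show ?thesis by (simp add: card_SigmaI sum_take_nth)
qed

lemma card_yd: "card (young_diagram la) = sum_list la"
proof -
  have "{x \<in> young_diagram la. fst x < length la} = young_diagram la"
    by (auto simp: young_diagram_def)
  then show ?thesis using card_yd_rows[of la "length la"] by simp
qed

lemma ssyt_card_lt:
  assumes "T \<in> ssyt la e"
  shows "card {x \<in> young_diagram la. T x < j} = (\<Sum>k<j. e k)"
proof (induction j)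
  case 0 then show ?case by simp
next
  case (Suc j)
  have "{x \<in> young_diagram la. T x < Suc j} = {x \<in> young_diagram la. T x < j} \<union> {x \<in> young_diagram la. T x = j}"
    by auto
  moreover have "card (\<dots>) = card {x \<in> young_diagram la. T x < j} + card {x \<in> young_diagram la. T x = j}"
    by (rule card_Un_disjoint) auto
  ultimately show ?case using Suc ssytD(4)[OF assms] by simp
qed

lemma ssyt_dominance:
  assumes "is_partition mu" "T \<in> ssyt mu e"
  shows "(\<Sum>k<j. e k) \<le> sum_list (take j mu)"
proof -
  have "{x \<in> young_diagram mu. T x < j} \<subseteq> {x \<in> young_diagram mu. fst x < j}"
    using ssyt_ge_row[OF assms] by fastforce
  then have "card {x \<in> young_diagram mu. T x < j} \<le> card {x \<in> young_diagram mu. fst x < j}"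
    by (intro card_mono) auto
  then show ?thesis using ssyt_card_lt[OF assms(2)] card_yd_rows by simp
qed

lemma ssyt_total:
  assumes "T \<in> ssyt mu e"
  shows "\<exists>J. (\<Sum>k<J. e k) = sum_list mu"
proof -
  define J where "J = Suc (Max (T ` young_diagram mu))"
  have "{x \<in> young_diagram mu. T x < J} = young_diagram mu"
    using J_def by (auto simp: less_Suc_eq_le)
  then show ?thesis using ssyt_card_lt[OF assms, of J] card_yd by metis
qed

lemma kostka_pc_size:
  assumes "is_partition mu" "kostka mu (pc la) \<noteq> 0"
  shows "sum_list la = sum_list mu"
proof -
  obtain T where T: "T \<in> ssyt mu (pc la)" using assms(2) unfolding kostka_def
    by (metis card.empty equals0I of_nat_0)
  have "sum_list la \<le> sum_list mu"
  proof -
    have "sum_list (take (length la) mu) \<le> sum_list mu"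
      by (metis append_take_drop_id le_add1 sum_list_append)
    then show ?thesis using ssyt_dominance[OF assms(1) T, of "length la"] sum_pc[of la "length la"]
      by simp
  qed
  moreover obtain J where "(\<Sum>k<J. pc la k) = sum_list mu" using ssyt_total[OF T] by blast
  then have "sum_list mu \<le> sum_list la" using sum_pc[of la J]
    by (metis append_take_drop_id le_add1 sum_list_append)
  ultimately show ?thesis by simp
qed

lemma kostka_pc_dom:
  assumes "is_partition mu" "kostka mu (pc la) \<noteq> 0"
  shows "sum_list (take j la) \<le> sum_list (take j mu)"
proof -
  obtain T where T: "T \<in> ssyt mu (pc la)" using assms(2) unfolding kostka_def
    by (metis card.empty equals0I of_nat_0)
  show ?thesis using ssyt_dominance[OF assms(1) T, of j] sum_pc[of la j] by simp
qed

lemma kostka_diag: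
  assumes "is_partition la"
  shows "kostka la (pc la) = 1"
proof -
  define T0 where "T0 = (\<lambda>x. if x \<in> young_diagram la then fst x else undefined)"
  have T0: "T0 \<in> ssyt la (pc la)"
  proof -
    have "card {c \<in> young_diagram la. T0 c = k} = pc la k" for k
    proof -
      have "{c \<in> young_diagram la. T0 c = k} = (if k < length la then {k} \<times> {..<la!k} else {})"
        by (auto simp: T0_def young_diagram_def)
      then show ?thesis by (simp add: pc_def)
    qed
    moreover have "\<And>i j. (Suc i, j) \<in> young_diagram la \<Longrightarrow> T0 (i, j) < T0 (Suc i, j)"
      using yd_up[OF assms] by (auto simp: T0_def)
    moreover have "\<And>i j. (i, Suc j) \<in> young_diagram la \<Longrightarrow> T0 (i, j) \<le> T0 (i, Suc j)"
      using yd_left by (auto simp: T0_def)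
    ultimately show ?thesis unfolding ssyt_def by (auto simp: T0_def)
  qed
  have uniq: "T = T0" if T: "T \<in> ssyt la (pc la)" for T
  proof
    fix x
    show "T x = T0 x"
    proof (cases "x \<in> young_diagram la")
      case False
      then show ?thesis using ssytD(1)[OF T] by (cases x) (auto simp: T0_def PiE_def extensional_def)
    next
      case True
      obtain r c where x: "x = (r,c)" by force
      have sub: "{x \<in> young_diagram la. T x < Suc r} \<subseteq> {x \<in> young_diagram la. fst x < Suc r}"
        using ssyt_ge_row[OF assms T] by fastforce
      have "card {x \<in> young_diagram la. T x < Suc r} = card {x \<in> young_diagram la. fst x < Suc r}"
        using ssyt_card_lt[OF T] card_yd_rows sum_pc by simp
      then have eq: "{x \<in> young_diagram la. T x < Suc r} = {x \<in> young_diagram la. fst x < Suc r}"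
        using sub by (intro card_subset_eq) auto
      have "(r,c) \<in> {x \<in> young_diagram la. fst x < Suc r}" using True x by simp
      then have "(r,c) \<in> {x \<in> young_diagram la. T x < Suc r}" using eq by simp
      then have "T (r,c) < Suc r" by simp
      moreover have "r \<le> T (r,c)" using ssyt_ge_row[OF assms T] True x by simp
      ultimately show ?thesis using True x by (simp add: T0_def)
    qed
  qed
  have "ssyt la (pc la) = {T0}" using T0 uniq by blast
  then show ?thesis by (simp add: kostka_def)
qed


section \<open>Bender-Knuth involution\<close>

definition sw :: "nat \<Rightarrow> nat \<Rightarrow> nat" where
  "sw i k = (if k = i then Suc i else if k = Suc i then i else k)"

lemma sw_sw[simp]: "sw i (sw i k) = k"
  by (simp add: sw_def)

lemma comp_sw_sw[simp]: "e \<circ> sw i \<circ> sw i = e"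
  by (auto simp: fun_eq_iff)

definition rowlt :: "nat list \<Rightarrow> ((nat\<times>nat)\<Rightarrow>nat) \<Rightarrow> nat \<Rightarrow> nat \<Rightarrow> nat" where
  "rowlt la T r k = card {c. c < la!r \<and> T (r,c) < k}"

lemma down_closed_eq:
  assumes "finite D" "\<And>c c'. c \<in> D \<Longrightarrow> c' \<le> c \<Longrightarrow> c' \<in> D"
  shows "D = {..<card D}"
proof -
  have sub: "D \<subseteq> {..<card D}"
  proof
    fix c assume "c \<in> D"
    then have "{..c} \<subseteq> D" using assms(2) by auto
    then have "card {..c} \<le> card D" using assms(1) by (intro card_mono)
    then show "c \<in> {..<card D}" by simp
  qed
  then show ?thesis using assms(1) by (intro card_subset_eq) auto
qed

lemma rowlt_le: "rowlt la T r k \<le> la!r"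
proof -
  have "card {c. c < la!r \<and> T (r,c) < k} \<le> card {..<la!r}" by (intro card_mono) auto
  then show ?thesis by (simp add: rowlt_def)
qed

lemma rowlt_mono: "k \<le> k' \<Longrightarrow> rowlt la T r k \<le> rowlt la T r k'"
  unfolding rowlt_def by (intro card_mono) auto

lemma rowlt_iff:
  assumes T: "T \<in> ssyt la e" and rc: "(r,c) \<in> young_diagram la"
  shows "T (r,c) < k \<longleftrightarrow> c < rowlt la T r k"
proof -
  define D where "D = {c. c < la!r \<and> T (r,c) < k}"
  have fin: "finite D" unfolding D_def by (rule finite_subset[of _ "{..<la!r}"]) auto
  have eq: "D = {..<card D}"
  proof (rule down_closed_eq[OF fin])
    fix c c' assume "c \<in> D" "c' \<le> c"
    then have "(r,c) \<in> young_diagram la" "c' < la!r" "T (r,c) < k" using rc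
      by (auto simp: D_def yd_mem)
    moreover then have "T (r,c') \<le> T (r,c)" using ssyt_row_mono[OF T] \<open>c' \<le> c\<close> by blast
    ultimately show "c' \<in> D" by (auto simp: D_def)
  qed
  define n where "n = card D"
  have eq2: "D = {..<n}" using eq n_def by simp
  have "c < la!r" using rc by (simp add: yd_mem)
  then have "c \<in> D \<longleftrightarrow> T (r,c) < k" by (simp add: D_def)
  moreover have "rowlt la T r k = n" unfolding rowlt_def n_def D_def by simp
  ultimately show ?thesis using eq2 by simp
qed

lemma rowlt_col:
  assumes P: "is_partition la" and T: "T \<in> ssyt la e" and r: "Suc r < length la"
  shows "rowlt la T (Suc r) (Suc k) \<le> rowlt la T r k"
proof -
  have "{c. c < la!Suc r \<and> T (Suc r,c) < Suc k} \<subseteq> {c. c < la!r \<and> T (r,c) < k}"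
  proof safe
    fix c assume c: "c < la!Suc r" "T (Suc r, c) < Suc k"
    then have "(Suc r, c) \<in> young_diagram la" using r by (simp add: yd_mem)
    then have "T (r,c) < T (Suc r, c)" "(r,c) \<in> young_diagram la"
      using ssytD(3)[OF T] yd_up[OF P] by auto
    then show "c < la!r" "T (r,c) < k" using c by (auto simp: yd_mem)
  qed
  then show ?thesis unfolding rowlt_def by (intro card_mono) auto
qed

definition Lb :: "nat list \<Rightarrow> nat \<Rightarrow> ((nat\<times>nat)\<Rightarrow>nat) \<Rightarrow> nat \<Rightarrow> nat" where
  "Lb la i T r = max (rowlt la T r i)
      (if Suc r < length la then rowlt la T (Suc r) (Suc (Suc i)) else 0)"

definition Ub :: "nat list \<Rightarrow> nat \<Rightarrow> ((nat\<times>nat)\<Rightarrow>nat) \<Rightarrow> nat \<Rightarrow> nat" where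
  "Ub la i T r = (if r = 0 then rowlt la T 0 (Suc (Suc i))
      else min (rowlt la T r (Suc (Suc i))) (rowlt la T (r - 1) i))"

definition rp :: "nat list \<Rightarrow> nat \<Rightarrow> ((nat\<times>nat)\<Rightarrow>nat) \<Rightarrow> nat \<Rightarrow> nat" where
  "rp la i T r = Lb la i T r + Ub la i T r - rowlt la T r (Suc i)"

definition bk :: "nat list \<Rightarrow> nat \<Rightarrow> ((nat\<times>nat)\<Rightarrow>nat) \<Rightarrow> ((nat\<times>nat)\<Rightarrow>nat)" where
  "bk la i T = (\<lambda>x. if x \<in> young_diagram la then
      (if T x = i \<or> T x = Suc i then (if snd x < rp la i T (fst x) then i else Suc i) else T x)
      else undefined)"

lemma bounds:
  assumes P: "is_partition la" and T: "T \<in> ssyt la e" and r: "r < length la"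
  shows "rowlt la T r i \<le> Lb la i T r" "Lb la i T r \<le> rowlt la T r (Suc i)"
    "rowlt la T r (Suc i) \<le> Ub la i T r" "Ub la i T r \<le> rowlt la T r (Suc (Suc i))"
    "Lb la i T r \<le> rp la i T r" "rp la i T r \<le> Ub la i T r"
    "rowlt la T r i \<le> rp la i T r" "rp la i T r \<le> rowlt la T r (Suc (Suc i))"
proof -
  have a: "rowlt la T r i \<le> rowlt la T r (Suc i)" "rowlt la T r (Suc i) \<le> rowlt la T r (Suc (Suc i))"
    by (auto intro: rowlt_mono)
  show 1: "rowlt la T r i \<le> Lb la i T r" by (simp add: Lb_def)
  show 2: "Lb la i T r \<le> rowlt la T r (Suc i)"
    using a rowlt_col[OF P T, of r "Suc i"] by (auto simp: Lb_def)
  show 3: "rowlt la T r (Suc i) \<le> Ub la i T r"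
    using a rowlt_col[OF P T, of "r - 1" i] r by (auto simp: Ub_def)
  show 4: "Ub la i T r \<le> rowlt la T r (Suc (Suc i))" by (auto simp: Ub_def)
  show "Lb la i T r \<le> rp la i T r" "rp la i T r \<le> Ub la i T r"
    using 1 2 3 4 by (auto simp: rp_def)
  then show "rowlt la T r i \<le> rp la i T r" "rp la i T r \<le> rowlt la T r (Suc (Suc i))"
    using 1 4 by auto
qed

lemma bk_lt:
  assumes P: "is_partition la" and T: "T \<in> ssyt la e" and rc: "(r,c) \<in> young_diagram la"
  shows "bk la i T (r,c) < k \<longleftrightarrow> (if k = Suc i then c < rp la i T r else T (r,c) < k)"
proof -
  have r: "r < length la" using rc by (simp add: yd_mem)
  note b = bounds[OF P T r, of i]
  note it = rowlt_iff[OF T rc]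
  show ?thesis
  proof (cases "T (r,c) = i \<or> T (r,c) = Suc i")
    case True
    then have "bk la i T (r,c) = (if c < rp la i T r then i else Suc i)"
      using rc by (simp add: bk_def)
    then show ?thesis using True by auto
  next
    case False
    then have bkT: "bk la i T (r,c) = T (r,c)" using rc by (simp add: bk_def)
    show ?thesis
    proof (cases "k = Suc i")
      case True
      have o: "T (r,c) < i \<or> Suc (Suc i) \<le> T (r,c)" using False by linarith
      have i1: "T (r,c) < i \<longleftrightarrow> c < rowlt la T r i" using it by blast
      have i2: "T (r,c) < Suc (Suc i) \<longleftrightarrow> c < rowlt la T r (Suc (Suc i))" using it by blast
      have e: "T (r,c) < Suc i \<longleftrightarrow> T (r,c) < i" using False by auto
      have "c < rowlt la T r i \<or> \<not> c < rowlt la T r (Suc (Suc i))" using o i1 i2 by linarith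
      then have "c < rp la i T r \<longleftrightarrow> c < rowlt la T r i" using b(7) b(8) by linarith
      then show ?thesis using True bkT e i1 by simp
    next
      case False
      then show ?thesis using bkT by simp
    qed
  qed
qed

lemma rowlt_bk:
  assumes P: "is_partition la" and T: "T \<in> ssyt la e" and r: "r < length la"
  shows "rowlt la (bk la i T) r k = (if k = Suc i then rp la i T r else rowlt la T r k)"
proof (cases "k = Suc i")
  case True
  have le: "rp la i T r \<le> la!r"
    using bounds(8)[OF P T r, of i] rowlt_le[of la T r "Suc (Suc i)"] by linarith
  have "{c. c < la!r \<and> bk la i T (r,c) < k} = {..<rp la i T r}"
  proof (intro set_eqI iffI)
    fix c assume c: "c \<in> {c. c < la!r \<and> bk la i T (r,c) < k}"
    then have "(r,c) \<in> young_diagram la" using r by (simp add: yd_mem)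
    then show "c \<in> {..<rp la i T r}" using c bk_lt[OF P T, of r c i k] True by simp
  next
    fix c assume c: "c \<in> {..<rp la i T r}"
    then have "(r,c) \<in> young_diagram la" using r le by (simp add: yd_mem)
    then show "c \<in> {c. c < la!r \<and> bk la i T (r,c) < k}"
      using c bk_lt[OF P T, of r c i k] True le by simp
  qed
  then show ?thesis using True by (simp add: rowlt_def)
next
  case False
  have "{c. c < la!r \<and> bk la i T (r,c) < k} = {c. c < la!r \<and> T (r,c) < k}"
  proof (intro Collect_cong conj_cong refl)
    fix c assume "c < la!r"
    then have "(r,c) \<in> young_diagram la" using r by (simp add: yd_mem)
    then show "bk la i T (r,c) < k \<longleftrightarrow> T (r,c) < k" using bk_lt[OF P T, of r c i k] False by simp
  qed
  then show ?thesis using False by (simp add: rowlt_def)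
qed

lemma ssyt_ext:
  assumes "T \<in> ssyt la e" "x \<notin> young_diagram la"
  shows "T x = undefined"
  using ssytD(1)[OF assms(1)] assms(2) by (cases x) (auto simp: PiE_def extensional_def)

lemma card_by_rows:
  "card {x \<in> young_diagram la. P x} = (\<Sum>r<length la. card {c. c < la!r \<and> P (r,c)})"
proof -
  have "{x \<in> young_diagram la. P x} = Sigma {..<length la} (\<lambda>r. {c. c < la!r \<and> P (r,c)})"
    by (auto simp: young_diagram_def)
  moreover have "finite {c. c < la!r \<and> P (r,c)}" for r
    by (rule finite_subset[of _ "{..<la!r}"]) auto
  ultimately show ?thesis by (simp add: card_SigmaI)
qed

lemma card_row_eq:
  "card {c. c < la!r \<and> U (r,c) = k} = rowlt la U r (Suc k) - rowlt la U r k"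
proof -
  have "{c. c < la!r \<and> U (r,c) = k} = {c. c < la!r \<and> U (r,c) < Suc k} - {c. c < la!r \<and> U (r,c) < k}"
    by auto
  moreover have "finite {c. c < la!r \<and> U (r,c) < Suc k}"
    by (rule finite_subset[of _ "{..<la!r}"]) auto
  moreover have "card ({c. c < la!r \<and> U (r,c) < Suc k} - {c. c < la!r \<and> U (r,c) < k})
      = card {c. c < la!r \<and> U (r,c) < Suc k} - card {c. c < la!r \<and> U (r,c) < k}"
    by (rule card_Diff_subset) (auto intro: finite_subset[of _ "{..<la!r}"])
  ultimately show ?thesis unfolding rowlt_def by simp
qed

lemma maxmin_sum:
  fixes m w :: "nat \<Rightarrow> nat"
  assumes "w (Suc L) = 0"
  shows "(\<Sum>r<Suc L. max (m r) (w (Suc r))) + (\<Sum>r<Suc L. (if r = 0 then w 0 else min (w r) (m (r - 1))))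
     = (\<Sum>r<Suc L. m r) + (\<Sum>r<Suc L. w r)"
proof -
  have A: "(\<Sum>r<Suc L. (if r = 0 then w 0 else min (w r) (m (r - 1)))) = w 0 + (\<Sum>r<L. min (w (Suc r)) (m r))"
    by (subst sum.lessThan_Suc_shift) simp
  have B: "(\<Sum>r<Suc L. max (m r) (w (Suc r))) = (\<Sum>r<L. max (m r) (w (Suc r))) + m L"
    using assms by simp
  have C: "(\<Sum>r<L. max (m r) (w (Suc r))) + (\<Sum>r<L. min (w (Suc r)) (m r)) = (\<Sum>r<L. m r + w (Suc r))"
    by (subst sum.distrib[symmetric]) (rule sum.cong, auto)
  have D: "(\<Sum>r<Suc L. w r) = w 0 + (\<Sum>r<L. w (Suc r))"
    by (subst sum.lessThan_Suc_shift) simp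
  show ?thesis using A B C D by (simp add: sum.distrib)
qed

lemma LU_sum:
  assumes P: "is_partition la" and T: "T \<in> ssyt la e"
  shows "(\<Sum>r<length la. Lb la i T r + Ub la i T r)
       = (\<Sum>r<length la. rowlt la T r i) + (\<Sum>r<length la. rowlt la T r (Suc (Suc i)))"
proof (cases "length la")
  case 0 then show ?thesis by simp
next
  case (Suc L)
  define w where "w r = (if r < length la then rowlt la T r (Suc (Suc i)) else 0)" for r
  define m where "m r = rowlt la T r i" for r
  have "w (Suc L) = 0" using Suc by (simp add: w_def)
  note ms = maxmin_sum[of w L m, OF this]
  have L: "(\<Sum>r<length la. Lb la i T r) = (\<Sum>r<Suc L. max (m r) (w (Suc r)))"
    using Suc by (intro sum.cong) (auto simp: Lb_def m_def w_def)
  have U: "(\<Sum>r<length la. Ub la i T r) = (\<Sum>r<Suc L. (if r = 0 then w 0 else min (w r) (m (r - 1))))"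
    using Suc by (intro sum.cong) (auto simp: Ub_def m_def w_def)
  have W: "(\<Sum>r<length la. rowlt la T r (Suc (Suc i))) = (\<Sum>r<Suc L. w r)"
    using Suc by (intro sum.cong) (auto simp: w_def)
  show ?thesis using ms L U W Suc by (simp add: sum.distrib m_def)
qed

lemma bk_ssyt:
  assumes P: "is_partition la" and T: "T \<in> ssyt la e"
  shows "bk la i T \<in> ssyt la (e \<circ> sw i)"
proof -
  let ?U = "bk la i T"
  have ext: "?U \<in> young_diagram la \<rightarrow>\<^sub>E UNIV" by (auto simp: bk_def PiE_def extensional_def)
  have row: "?U (r, c) \<le> ?U (r, Suc c)" if rc: "(r, Suc c) \<in> young_diagram la" for r c
  proof -
    have rc0: "(r,c) \<in> young_diagram la" using yd_left[OF rc] .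
    have "?U (r,c) < k" if "?U (r, Suc c) < k" for k
      using that bk_lt[OF P T rc, of i k] bk_lt[OF P T rc0, of i k] ssytD(2)[OF T rc]
      by (auto split: if_splits)
    then show ?thesis using not_less by blast
  qed
  have col: "?U (r, c) < ?U (Suc r, c)" if rc: "(Suc r, c) \<in> young_diagram la" for r c
  proof -
    have rc0: "(r,c) \<in> young_diagram la" using yd_up[OF P rc] .
    have r1: "Suc r < length la" using rc by (simp add: yd_mem)
    note b0 = bounds[OF P T, of r i] and b1 = bounds[OF P T r1, of i]
    have r0: "r < length la" using r1 by simp
    have "?U (r,c) < k" if "?U (Suc r, c) < Suc k" for k
    proof (cases "k = i")
      case True
      then have "c < rp la i T (Suc r)" using that bk_lt[OF P T rc, of i "Suc k"] by simp
      then have "c < rowlt la T r i" using b1 by (simp add: Ub_def)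
      then show ?thesis using True bk_lt[OF P T rc0, of i k] rowlt_iff[OF T rc0, of i] by simp
    next
      case F: False
      show ?thesis
      proof (cases "k = Suc i")
        case True
        then have "T (Suc r, c) < Suc (Suc i)" using that bk_lt[OF P T rc, of i "Suc k"] by simp
        then have "c < rowlt la T (Suc r) (Suc (Suc i))" using rowlt_iff[OF T rc] by simp
        then have "c < rp la i T r" using b0[OF r0] r1 by (simp add: Lb_def)
        then show ?thesis using True bk_lt[OF P T rc0, of i k] by simp
      next
        case False
        then have "T (Suc r, c) < Suc k" using F that bk_lt[OF P T rc, of i "Suc k"] by simp
        then have "T (r,c) < k" using ssytD(3)[OF T rc] by simp
        then show ?thesis using False bk_lt[OF P T rc0, of i k] by simp
      qed
    qed
    from this[of "?U (Suc r, c)"] show ?thesis by simp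
  qed
  have cnt: "card {x \<in> young_diagram la. ?U x = k} = e (sw i k)" for k
  proof -
    have rT: "rowlt la ?U r k = (if k = Suc i then rp la i T r else rowlt la T r k)" if "r < length la" for r k
      using rowlt_bk[OF P T that] .
    let ?m = "\<lambda>r. rowlt la T r i" and ?p = "\<lambda>r. rowlt la T r (Suc i)"
      and ?n = "\<lambda>r. rowlt la T r (Suc (Suc i))" and ?q = "\<lambda>r. rp la i T r"
    have ord: "?m r \<le> ?p r" "?p r \<le> ?n r" "?m r \<le> ?q r" "?q r \<le> ?n r"
      "?q r + ?p r = Lb la i T r + Ub la i T r" if "r < length la" for r
      using bounds[OF P T that, of i] rowlt_mono[of i "Suc i" la T r] rowlt_mono[of "Suc i" "Suc (Suc i)" la T r]
      by (auto simp: rp_def)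
    have LU: "(\<Sum>r<length la. ?q r) + (\<Sum>r<length la. ?p r) = (\<Sum>r<length la. ?m r) + (\<Sum>r<length la. ?n r)"
      using LU_sum[OF P T, of i] ord(5) by (simp add: sum.distrib[symmetric])
    have sM: "(\<Sum>r<length la. ?m r) \<le> (\<Sum>r<length la. ?p r)" "(\<Sum>r<length la. ?p r) \<le> (\<Sum>r<length la. ?n r)"
      "(\<Sum>r<length la. ?m r) \<le> (\<Sum>r<length la. ?q r)" "(\<Sum>r<length la. ?q r) \<le> (\<Sum>r<length la. ?n r)"
      using ord by (auto intro: sum_mono)
    have eU: "card {x \<in> young_diagram la. ?U x = k} = (\<Sum>r<length la. rowlt la ?U r (Suc k) - rowlt la ?U r k)"
      by (simp add: card_by_rows card_row_eq)
    have eT: "e k' = (\<Sum>r<length la. rowlt la T r (Suc k') - rowlt la T r k')" for k'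
      using ssytD(4)[OF T, of k'] by (simp add: card_by_rows card_row_eq)
    show ?thesis
    proof (cases "k = i")
      case True
      have "card {x \<in> young_diagram la. ?U x = k} = (\<Sum>r<length la. ?q r - ?m r)"
        using eU True rT by (intro trans[OF eU] sum.cong) auto
      also have "\<dots> = (\<Sum>r<length la. ?q r) - (\<Sum>r<length la. ?m r)"
        using ord by (intro sum_subtractf_nat) auto
      also have "\<dots> = (\<Sum>r<length la. ?n r) - (\<Sum>r<length la. ?p r)" using LU sM by linarith
      also have "\<dots> = (\<Sum>r<length la. ?n r - ?p r)"
        using ord by (intro sum_subtractf_nat[symmetric]) auto
      also have "\<dots> = e (sw i k)" using eT[of "Suc i"] True by (simp add: sw_def)
      finally show ?thesis .
    next
      case F: False
      show ?thesis
      proof (cases "k = Suc i")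
        case True
        have "card {x \<in> young_diagram la. ?U x = k} = (\<Sum>r<length la. ?n r - ?q r)"
          using eU True rT by (intro trans[OF eU] sum.cong) auto
        also have "\<dots> = (\<Sum>r<length la. ?n r) - (\<Sum>r<length la. ?q r)"
          using ord by (intro sum_subtractf_nat) auto
        also have "\<dots> = (\<Sum>r<length la. ?p r) - (\<Sum>r<length la. ?m r)" using LU sM by linarith
        also have "\<dots> = (\<Sum>r<length la. ?p r - ?m r)"
          using ord by (intro sum_subtractf_nat[symmetric]) auto
        also have "\<dots> = e (sw i k)" using eT[of i] True by (simp add: sw_def)
        finally show ?thesis .
      next
        case False
        have "card {x \<in> young_diagram la. ?U x = k} = (\<Sum>r<length la. rowlt la T r (Suc k) - rowlt la T r k)"
          using eU False F rT by (intro trans[OF eU] sum.cong) auto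
        then show ?thesis using eT[of k] F False by (simp add: sw_def)
      qed
    qed
  qed
  show ?thesis unfolding ssyt_def using ext row col cnt by auto
qed

lemma bk_bk:
  assumes P: "is_partition la" and T: "T \<in> ssyt la e"
  shows "bk la i (bk la i T) = T"
proof
  fix x
  let ?U = "bk la i T"
  have U: "?U \<in> ssyt la (e \<circ> sw i)" by (rule bk_ssyt[OF P T])
  show "bk la i ?U x = T x"
  proof (cases "x \<in> young_diagram la")
    case False
    then show ?thesis using ssyt_ext[OF T False] by (simp add: bk_def)
  next
    case True
    obtain r c where x: "x = (r,c)" by force
    have r: "r < length la" using True x by (simp add: yd_mem)
    have rl: "rowlt la ?U r k = (if k = Suc i then rp la i T r else rowlt la T r k)" for k
      using rowlt_bk[OF P T r] .
    have "Lb la i ?U r = Lb la i T r"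
      unfolding Lb_def using rl rowlt_bk[OF P T, of "Suc r" i] by auto
    moreover have "Ub la i ?U r = Ub la i T r"
      unfolding Ub_def using rl rowlt_bk[OF P T, of "r - 1" i] r rowlt_bk[OF P T, of 0 i]
      by auto
    ultimately have rpU: "rp la i ?U r = rowlt la T r (Suc i)"
      using bounds[OF P T r, of i] rl[of "Suc i"] by (simp add: rp_def)
    have inU: "(?U x = i \<or> ?U x = Suc i) \<longleftrightarrow> (T x = i \<or> T x = Suc i)"
      using True by (auto simp: bk_def)
    show ?thesis
    proof (cases "T x = i \<or> T x = Suc i")
      case True2: True
      have "bk la i ?U x = (if c < rowlt la T r (Suc i) then i else Suc i)"
        using True inU True2 rpU x by (simp add: bk_def)
      also have "\<dots> = T x" using rowlt_iff[OF T, of r c "Suc i"] True x True2 by auto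
      finally show ?thesis .
    next
      case False
      then show ?thesis using True inU by (simp add: bk_def)
    qed
  qed
qed

lemma kostka_sw:
  assumes P: "is_partition la"
  shows "kostka la (e \<circ> sw i) = kostka la e"
proof -
  have "bij_betw (bk la i) (ssyt la e) (ssyt la (e \<circ> sw i))"
  proof (rule bij_betw_byWitness[where f' = "bk la i"])
    show "\<forall>a\<in>ssyt la e. bk la i (bk la i a) = a" using bk_bk[OF P] by blast
    show "\<forall>a'\<in>ssyt la (e \<circ> sw i). bk la i (bk la i a') = a'" using bk_bk[OF P] by blast
    show "bk la i ` ssyt la e \<subseteq> ssyt la (e \<circ> sw i)" using bk_ssyt[OF P] by blast
    show "bk la i ` ssyt la (e \<circ> sw i) \<subseteq> ssyt la e"
      using bk_ssyt[OF P, of _ "e \<circ> sw i" i] by auto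
  qed
  then show ?thesis unfolding kostka_def by (simp add: bij_betw_same_card)
qed

lemma kostka_transpose_adj:
  assumes P: "is_partition la" and "a < b"
  shows "kostka la (e \<circ> Transposition.transpose a b) = kostka la e"
  using assms(2)
proof (induction b arbitrary: e rule: less_induct)
  case (less b)
  show ?case
  proof (cases "b = Suc a")
    case True
    have "Transposition.transpose a b = sw a" using True
      by (auto simp: fun_eq_iff sw_def Transposition.transpose_def)
    then have "e \<circ> Transposition.transpose a b = e \<circ> sw a" by simp
    then show ?thesis using kostka_sw[OF P, of e a] by (simp only:)
  next
    case False
    then obtain b' where b: "b = Suc b'" "a < b'" using less(2) by (cases b) auto
    have "Transposition.transpose a b = sw b' \<circ> Transposition.transpose a b' \<circ> sw b'"
      using b by (auto simp: fun_eq_iff sw_def Transposition.transpose_def)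
    then have "e \<circ> Transposition.transpose a b = ((e \<circ> sw b') \<circ> Transposition.transpose a b') \<circ> sw b'"
      by (simp add: comp_assoc)
    then have "kostka la (e \<circ> Transposition.transpose a b) = kostka la (((e \<circ> sw b') \<circ> Transposition.transpose a b') \<circ> sw b')"
      by (simp only:)
    also have "\<dots> = kostka la ((e \<circ> sw b') \<circ> Transposition.transpose a b')" by (rule kostka_sw[OF P])
    also have "\<dots> = kostka la (e \<circ> sw b')" using less(1)[of b' "e \<circ> sw b'"] b by (simp only: lessI)
    also have "\<dots> = kostka la e" by (rule kostka_sw[OF P])
    finally show ?thesis .
  qed
qed

lemma kostka_transpose:
  assumes P: "is_partition la"
  shows "kostka la (e \<circ> Transposition.transpose a b) = kostka la e"
proof -
  consider "a = b" | "a < b" | "b < a" by linarith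
  then show ?thesis
  proof cases
    case 1 then show ?thesis by simp
  next
    case 2 then show ?thesis using kostka_transpose_adj[OF P] by blast
  next
    case 3 then show ?thesis using kostka_transpose_adj[OF P 3] by (simp add: transpose_commute)
  qed
qed

lemma kostka_perm:
  assumes P: "is_partition la" and p: "p permutes {..<N}"
  shows "kostka la (e \<circ> p) = kostka la e"
proof -
  have "\<forall>e::nat\<Rightarrow>nat. kostka la (e \<circ> p) = kostka la e"
    using p finite_lessThan
  proof (induction rule: permutes_induct)
    case id then show ?case by simp
  next
    case (swap a b p)
    show ?case
    proof
      fix e :: "nat \<Rightarrow> nat"
      have "e \<circ> (Transposition.transpose a b \<circ> p) = (e \<circ> Transposition.transpose a b) \<circ> p"
        by (simp add: comp_assoc)
      moreover have "kostka la ((e \<circ> Transposition.transpose a b) \<circ> p) = kostka la (e \<circ> Transposition.transpose a b)"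
        using swap by blast
      ultimately show "kostka la (e \<circ> (Transposition.transpose a b \<circ> p)) = kostka la e"
        using kostka_transpose[OF P, of e a b] by simp
    qed
  qed
  then show ?thesis by blast
qed


section \<open>Existence and uniqueness of Schur expansions\<close>

lemma length_le_sum_pos: "\<forall>x\<in>set xs. (0::nat) < x \<Longrightarrow> length xs \<le> sum_list xs"
  by (induction xs) auto

lemma prefix_sums_eq:
  "(\<forall>j. sum_list (take j xs) = sum_list (take j (ys::nat list))) \<Longrightarrow> \<forall>x\<in>set xs. 0 < x \<Longrightarrow> \<forall>y\<in>set ys. 0 < y \<Longrightarrow> xs = ys"
proof (induction xs arbitrary: ys)
  case Nil
  then show ?case
  proof (cases ys)
    case (Cons y ys')
    then show ?thesis using Nil(1)[rule_format, of 1] Nil(3) by simp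
  qed simp
next
  case (Cons x xs)
  note IH = Cons.IH and pr = Cons.prems
  show ?case
  proof (cases ys)
    case Nil
    then show ?thesis using pr(1)[rule_format, of 1] pr(2) by simp
  next
    case (Cons y ys')
    have xy: "x = y" using pr(1)[rule_format, of 1] Cons by simp
    have "\<forall>j. sum_list (take j xs) = sum_list (take j ys')"
    proof
      fix j show "sum_list (take j xs) = sum_list (take j ys')"
        using pr(1)[rule_format, of "Suc j"] Cons xy by simp
    qed
    then have "xs = ys'" using IH pr(2,3) Cons by simp
    then show ?thesis using xy Cons by simp
  qed
qed

definition rk :: "nat \<Rightarrow> nat list \<Rightarrow> nat" where
  "rk n la = (\<Sum>j<Suc n. sum_list (take j la))"

lemma partitions_length: "la \<in> partitions_of n \<Longrightarrow> length la \<le> n"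
  unfolding partitions_of_def is_partition_def using length_le_sum_pos by auto

lemma finite_partitions: "finite (partitions_of n)"
proof -
  have "partitions_of n \<subseteq> {xs. set xs \<subseteq> {..n} \<and> length xs \<le> n}"
  proof
    fix la assume la: "la \<in> partitions_of n"
    have "x \<le> n" if "x \<in> set la" for x
      using member_le_sum_list[OF that] la by (simp add: partitions_of_def)
    then show "la \<in> {xs. set xs \<subseteq> {..n} \<and> length xs \<le> n}"
      using partitions_length[OF la] by auto
  qed
  moreover have "finite {xs. set xs \<subseteq> {..n} \<and> length xs \<le> n}"
    by (rule finite_lists_length_le) auto
  ultimately show ?thesis by (rule finite_subset)
qed

lemma dom_rank:
  assumes la: "la \<in> partitions_of n" and mu: "mu \<in> partitions_of n"
    and K: "kostka mu (pc la) \<noteq> 0"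
  shows "rk n la \<le> rk n mu" "rk n la = rk n mu \<Longrightarrow> la = mu"
proof -
  have pmu: "is_partition mu" using mu by (simp add: partitions_of_def)
  have le: "sum_list (take j la) \<le> sum_list (take j mu)" for j
    using kostka_pc_dom[OF pmu K] .
  show "rk n la \<le> rk n mu" unfolding rk_def by (intro sum_mono le)
  assume eq: "rk n la = rk n mu"
  have "\<forall>j. sum_list (take j la) = sum_list (take j mu)"
  proof
    fix j
    show "sum_list (take j la) = sum_list (take j mu)"
    proof (cases "j < Suc n")
      case True
      show ?thesis
      proof (rule ccontr)
        assume "sum_list (take j la) \<noteq> sum_list (take j mu)"
        then have "sum_list (take j la) < sum_list (take j mu)" using le[of j] by simp
        then have "rk n la < rk n mu" unfolding rk_def
          using True le by (intro sum_strict_mono_ex1) auto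
        then show False using eq by simp
      qed
    next
      case False
      then have "take j la = la" "take j mu = mu"
        using partitions_length[OF la] partitions_length[OF mu] by auto
      then show ?thesis using la mu by (simp add: partitions_of_def)
    qed
  qed
  then show "la = mu" using prefix_sums_eq la mu by (auto simp: partitions_of_def is_partition_def)
qed

lemma pc_fin_supp: "fin_supp (pc la)"
  unfolding fin_supp_def pc_def by (rule finite_subset[of _ "{..<length la}"]) auto

definition upclosed :: "nat \<Rightarrow> nat list set \<Rightarrow> bool" where
  "upclosed n A \<longleftrightarrow> (\<forall>la\<in>A. \<forall>mu\<in>partitions_of n. kostka mu (pc la) \<noteq> 0 \<longrightarrow> mu \<in> A)"

lemma triangular_solve:
  fixes f :: symfun
  assumes "A \<subseteq> partitions_of n" "upclosed n A"
  shows "\<exists>c. (\<forall>mu. mu \<notin> A \<longrightarrow> c mu = 0) \<and>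
     (\<forall>la\<in>A. f (pc la) = (\<Sum>mu\<in>partitions_of n. c mu * kostka mu (pc la)))"
  using assms
proof (induction "card A" arbitrary: A rule: less_induct)
  case less
  show ?case
  proof (cases "A = {}")
    case True
    then show ?thesis by (intro exI[of _ "\<lambda>_. 0"]) auto
  next
    case False
    have finA: "finite A" using less(2) finite_partitions finite_subset by blast
    obtain la0 where la0: "la0 \<in> A" "rk n la0 = Min (rk n ` A)"
      using False finA by (metis (mono_tags, lifting) Min_in finite_imageI image_iff image_is_empty)
    have la0min: "rk n la0 \<le> rk n la" if "la \<in> A" for la
      using la0(2) finA that by simp
    have la0P: "la0 \<in> partitions_of n" using la0 less(2) by blast
    let ?A = "A - {la0}"
    have K0: "kostka la0 (pc la) = 0" if "la \<in> ?A" for la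
    proof (rule ccontr)
      assume "kostka la0 (pc la) \<noteq> 0"
      moreover have laP: "la \<in> partitions_of n" using that less(2) by blast
      ultimately have "rk n la \<le> rk n la0" "rk n la = rk n la0 \<Longrightarrow> la = la0"
        using dom_rank[OF laP la0P] by auto
      then show False using la0min[of la] that by auto
    qed
    have up: "upclosed n ?A"
      unfolding upclosed_def
    proof (intro ballI impI)
      fix la mu assume la: "la \<in> ?A" and mu: "mu \<in> partitions_of n" and K: "kostka mu (pc la) \<noteq> 0"
      then have "mu \<in> A" using less(3) unfolding upclosed_def by blast
      moreover have "mu \<noteq> la0" using K0[OF la] K by auto
      ultimately show "mu \<in> ?A" by simp
    qed
    have "card ?A < card A" using la0(1) finA by (rule card_Diff1_less[rotated])
    then obtain c' where c': "\<forall>mu. mu \<notin> ?A \<longrightarrow> c' mu = 0"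
      "\<forall>la\<in>?A. f (pc la) = (\<Sum>mu\<in>partitions_of n. c' mu * kostka mu (pc la))"
      using less(1)[of ?A] less(2) up by blast
    define v where "v = f (pc la0) - (\<Sum>mu\<in>partitions_of n. c' mu * kostka mu (pc la0))"
    define c where "c = c'(la0 := v)"
    have sumc: "(\<Sum>mu\<in>partitions_of n. c mu * kostka mu (pc la)) =
        (\<Sum>mu\<in>partitions_of n. c' mu * kostka mu (pc la)) + v * kostka la0 (pc la)" for la
    proof -
      have c'0: "c' la0 = 0" using c' by simp
      have "(\<Sum>mu\<in>partitions_of n. c mu * kostka mu (pc la)) =
          c la0 * kostka la0 (pc la) + (\<Sum>mu\<in>partitions_of n - {la0}. c mu * kostka mu (pc la))"
        using la0P finite_partitions by (simp add: sum.remove)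
      also have "(\<Sum>mu\<in>partitions_of n - {la0}. c mu * kostka mu (pc la)) =
          (\<Sum>mu\<in>partitions_of n - {la0}. c' mu * kostka mu (pc la))"
        by (rule sum.cong) (auto simp: c_def)
      also have "(\<Sum>mu\<in>partitions_of n. c' mu * kostka mu (pc la)) =
          c' la0 * kostka la0 (pc la) + (\<Sum>mu\<in>partitions_of n - {la0}. c' mu * kostka mu (pc la))"
        using la0P finite_partitions by (simp add: sum.remove)
      ultimately show ?thesis using c'0 by (simp add: c_def)
    qed
    show ?thesis
    proof (intro exI[of _ c] conjI allI impI ballI)
      fix mu assume "mu \<notin> A" then show "c mu = 0" using c' la0 by (auto simp: c_def)
    next
      fix la assume la: "la \<in> A"
      show "f (pc la) = (\<Sum>mu\<in>partitions_of n. c mu * kostka mu (pc la))"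
      proof (cases "la = la0")
        case True
        have "is_partition la0" using la0P by (simp add: partitions_of_def)
        then show ?thesis using True sumc[of la0] kostka_diag by (simp add: v_def)
      next
        case False
        then have "la \<in> ?A" using la by simp
        then show ?thesis using sumc[of la] K0 c' by simp
      qed
    qed
  qed
qed

lemma sort_partition:
  assumes "fin_supp e"
  shows "\<exists>N p la. p permutes {..<N} \<and> is_partition la \<and> e \<circ> p = pc la"
proof -
  obtain N where N: "{i. e i \<noteq> 0} \<subseteq> {..<N}"
  proof -
    have "finite {i. e i \<noteq> 0}" using assms unfolding fin_supp_def .
    then have "{i. e i \<noteq> 0} \<subseteq> {..<Suc (Max {i. e i \<noteq> 0})}"
      by (auto simp: less_Suc_eq_le)
    then show ?thesis using that by blast
  qed
  define xs where "xs = map e [0..<N]"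
  define ys where "ys = rev (sort xs)"
  have "mset xs = mset ys" by (simp add: ys_def)
  have lys: "length ys = N" "length xs = N" by (auto simp: ys_def xs_def)
  obtain p' where p': "p' permutes {..<length xs}" "permute_list p' xs = ys"
    using mset_eq_permutation[of ys xs] \<open>mset xs = mset ys\<close> by (metis (no_types))
  have sys: "sorted_wrt (\<ge>) ys" unfolding ys_def sorted_wrt_rev
    using sorted_sort[of xs] by (simp add: sorted_wrt_iff_nth_less)
  define la where "la = takeWhile (\<lambda>x. 0 < x) ys"
  define d where "d = dropWhile (\<lambda>x. 0 < x) ys"
  have ysd: "ys = la @ d" by (simp add: la_def d_def)
  have sla: "sorted_wrt (\<ge>) la" "sorted_wrt (\<ge>) d" "\<forall>x\<in>set la. \<forall>y\<in>set d. y \<le> x"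
    using sys ysd sorted_wrt_append[of "(\<ge>)" la d] by auto
  have d0: "\<forall>y\<in>set d. y = 0"
  proof (cases d)
    case Nil then show ?thesis by simp
  next
    case (Cons z zs)
    have "\<not> 0 < z" using Cons hd_dropWhile[of "\<lambda>x. 0 < x" ys] unfolding d_def
      by (metis list.distinct(1) list.sel(1))
    then show ?thesis using Cons sla(2) by auto
  qed
  have pla: "is_partition la" unfolding is_partition_def using sla(1)
    by (auto simp: la_def dest: set_takeWhileD)
  have ysnth: "ys ! k = pc la k" if "k < N" for k
  proof (cases "k < length la")
    case True then show ?thesis by (simp add: ysd nth_append pc_def)
  next
    case False
    then have "ys ! k = d ! (k - length la)" by (simp add: ysd nth_append)
    moreover have "k - length la < length d" using that False lys ysd by simp
    ultimately show ?thesis using d0 False by (simp add: pc_def)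
  qed
  have "e \<circ> p' = pc la"
  proof
    fix k
    show "(e \<circ> p') k = pc la k"
    proof (cases "k < N")
      case True
      have "ys ! k = xs ! p' k" using p' True lys permute_list_nth by metis
      moreover have "p' k < N" using permutes_in_image[of p' "{..<N}" k] p'(1) True lys by simp
      ultimately show ?thesis using ysnth[OF True] by (simp add: xs_def)
    next
      case False
      then have "p' k = k" using p'(1) lys by (simp add: permutes_not_in)
      moreover have "e k = 0" using N False by auto
      moreover have "length la \<le> N" using ysd lys by (metis le_add1 length_append)
      ultimately show ?thesis using False by (simp add: pc_def)
    qed
  qed
  then show ?thesis using p'(1) lys pla by metis
qed

definition symmetric_fn :: "symfun \<Rightarrow> bool" where
  "symmetric_fn f \<longleftrightarrow> (\<forall>N p e. p permutes {..<N} \<longrightarrow> f (e \<circ> p) = f e)"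

definition homog :: "nat \<Rightarrow> symfun \<Rightarrow> bool" where
  "homog n f \<longleftrightarrow> (\<forall>la. is_partition la \<longrightarrow> sum_list la \<noteq> n \<longrightarrow> f (pc la) = 0)"

lemma schur_exists:
  assumes sym: "symmetric_fn f" and hom: "homog n f"
  shows "\<exists>c. schur_expansion n f c"
proof -
  have "upclosed n (partitions_of n)" by (simp add: upclosed_def)
  then obtain c where c: "\<forall>mu. mu \<notin> partitions_of n \<longrightarrow> c mu = 0"
     "\<forall>la\<in>partitions_of n. f (pc la) = (\<Sum>mu\<in>partitions_of n. c mu * kostka mu (pc la))"
    using triangular_solve[of "partitions_of n" n f] by blast
  have "f e = (\<Sum>la\<in>partitions_of n. c la * kostka la e)" if fs: "fin_supp e" for e
  proof -
    obtain N p la where p: "p permutes {..<N}" "is_partition la" "e \<circ> p = pc la"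
      using sort_partition[OF fs] by blast
    have fe: "f e = f (pc la)" using sym p unfolding symmetric_fn_def by metis
    have Ke: "kostka mu e = kostka mu (pc la)" if "mu \<in> partitions_of n" for mu
      using kostka_perm[of mu p N e] that p by (simp add: partitions_of_def)
    show ?thesis
    proof (cases "la \<in> partitions_of n")
      case True
      then show ?thesis using c(2) fe Ke by simp
    next
      case False
      then have s: "sum_list la \<noteq> n" using p(2) by (simp add: partitions_of_def)
      then have "f (pc la) = 0" using hom p(2) unfolding homog_def by blast
      moreover have "kostka mu (pc la) = 0" if "mu \<in> partitions_of n" for mu
        using kostka_pc_size[of mu la] that s by (auto simp: partitions_of_def)
      ultimately show ?thesis using fe Ke by simp
    qed
  qed
  then show ?thesis unfolding schur_expansion_def using c(1) by blast
qed

lemma schur_unique: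
  assumes c1: "schur_expansion n f c1" and c2: "schur_expansion n f c2"
  shows "c1 = c2"
proof (rule ccontr)
  assume ne: "c1 \<noteq> c2"
  define d where "d mu = c1 mu - c2 mu" for mu
  have d0: "d mu = 0" if "mu \<notin> partitions_of n" for mu
    using c1 c2 that unfolding schur_expansion_def d_def by auto
  have dsum: "(\<Sum>mu\<in>partitions_of n. d mu * kostka mu (pc la)) = 0" for la
  proof -
    have "f (pc la) = (\<Sum>mu\<in>partitions_of n. c1 mu * kostka mu (pc la))"
         "f (pc la) = (\<Sum>mu\<in>partitions_of n. c2 mu * kostka mu (pc la))"
      using c1 c2 pc_fin_supp unfolding schur_expansion_def by auto
    then show ?thesis by (simp add: d_def left_diff_distrib sum_subtractf)
  qed
  define S where "S = {mu \<in> partitions_of n. d mu \<noteq> 0}"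
  have "S \<noteq> {}"
  proof
    assume "S = {}"
    then have "d mu = 0" for mu using d0 unfolding S_def by (cases "mu \<in> partitions_of n") auto
    then show False using ne unfolding d_def by (auto simp: fun_eq_iff)
  qed
  moreover have finS: "finite S" unfolding S_def using finite_partitions by simp
  ultimately obtain la0 where la0: "la0 \<in> S" "rk n la0 = Max (rk n ` S)"
    by (metis (mono_tags, lifting) Max_in finite_imageI image_iff image_is_empty)
  have la0P: "la0 \<in> partitions_of n" using la0 by (simp add: S_def)
  have rest: "(\<Sum>mu\<in>partitions_of n - {la0}. d mu * kostka mu (pc la0)) = 0"
  proof (rule sum.neutral, rule ballI)
    fix mu assume mu: "mu \<in> partitions_of n - {la0}"
    show "d mu * kostka mu (pc la0) = 0"
    proof (rule ccontr)
      assume "d mu * kostka mu (pc la0) \<noteq> 0"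
      then have dm: "d mu \<noteq> 0" and K: "kostka mu (pc la0) \<noteq> 0" by auto
      have muS: "mu \<in> S" using mu dm by (simp add: S_def)
      have "rk n mu \<le> rk n la0" using la0(2) finS muS by simp
      then show False using dom_rank[OF la0P _ K] mu by auto
    qed
  qed
  have "(\<Sum>mu\<in>partitions_of n. d mu * kostka mu (pc la0)) =
      d la0 * kostka la0 (pc la0) + (\<Sum>mu\<in>partitions_of n - {la0}. d mu * kostka mu (pc la0))"
    using la0P finite_partitions by (simp add: sum.remove)
  then have "d la0 * kostka la0 (pc la0) = 0" using rest dsum[of la0] by simp
  moreover have "kostka la0 (pc la0) = 1" using la0P kostka_diag by (simp add: partitions_of_def)
  ultimately show False using la0 by (simp add: S_def)
qed

lemma schur_coeff_expansion:
  assumes "symmetric_fn f" "homog n f"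
  shows "schur_expansion n f (schur_coeff n f)"
proof -
  have "\<exists>!c. schur_expansion n f c" using schur_exists[OF assms] schur_unique by blast
  then show ?thesis unfolding schur_coeff_def by (rule theI')
qed


section \<open>Two-row Schur coefficients\<close>

definition mu2 :: "nat \<Rightarrow> nat \<Rightarrow> nat \<Rightarrow> nat" where
  "mu2 n k = (\<lambda>i. if i = 0 then n - k else if i = 1 then k else 0)"

definition g2 :: "nat \<Rightarrow> nat \<Rightarrow> nat list" where
  "g2 n j = (if j = 0 then [n] else [n - j, j])"

lemma mu2_fin_supp: "fin_supp (mu2 n k)"
  unfolding fin_supp_def mu2_def by (rule finite_subset[of _ "{..<2}"]) auto

lemma yd_single: "young_diagram [n] = young_diagram [n, 0]"
  by (auto simp: young_diagram_def less_Suc_eq nth_Cons split: nat.splits)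

lemma kostka_single: "kostka [n] e = kostka [n, 0] e"
  unfolding kostka_def ssyt_def yd_single ..

lemma yd2: "(r, c) \<in> young_diagram [a, b] \<longleftrightarrow> (r = 0 \<and> c < a) \<or> (r = 1 \<and> c < b)"
  by (auto simp: young_diagram_def less_Suc_eq)

lemma ssyt_val_pos:
  assumes T: "T \<in> ssyt la e" and x: "x \<in> young_diagram la"
  shows "0 < e (T x)"
proof -
  have "x \<in> {c \<in> young_diagram la. T c = T x}" using x by simp
  then have "{c \<in> young_diagram la. T c = T x} \<noteq> {}" by blast
  then have "card {c \<in> young_diagram la. T c = T x} \<noteq> 0" by simp
  then show ?thesis using ssytD(4)[OF T] by simp
qed

lemma two_row_structure:
  assumes T: "T \<in> ssyt [a, b] (mu2 n k)" and ab: "b \<le> a"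
  shows "\<And>c. c < b \<Longrightarrow> T (1, c) = 1"
    "\<And>c. c < a \<Longrightarrow> T (0, c) \<le> 1"
    "{c. c < a \<and> T (0, c) = 0} = {..<n - k}"
proof -
  have P: "is_partition [a, b] \<or> b = 0" using ab by (auto simp: is_partition_def)
  have le1: "T x \<le> 1" if "x \<in> young_diagram [a, b]" for x
    using ssyt_val_pos[OF T that] by (auto simp: mu2_def split: if_splits)
  show r1: "T (1, c) = 1" if "c < b" for c
  proof -
    have x: "(1, c) \<in> young_diagram [a, b]" using that by (simp add: yd2)
    have "(0, c) \<in> young_diagram [a, b]" using that ab by (simp add: yd2)
    have "T (0, c) < T (Suc 0, c)" using ssytD(3)[OF T, of 0 c] x by simp
    then show ?thesis using le1[OF x] by simp
  qed
  show "T (0, c) \<le> 1" if "c < a" for c using le1 that by (simp add: yd2)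
  define Z where "Z = {c. c < a \<and> T (0, c) = 0}"
  have finZ: "finite Z" unfolding Z_def by (rule finite_subset[of _ "{..<a}"]) auto
  have "{x \<in> young_diagram [a, b]. T x = 0} = Pair (0::nat) ` Z"
  proof (intro set_eqI iffI)
    fix x assume x: "x \<in> {x \<in> young_diagram [a, b]. T x = 0}"
    obtain r c where rc: "x = (r, c)" by force
    have "r = 0"
    proof (rule ccontr)
      assume "r \<noteq> 0"
      then have "r = 1" "c < b" using x rc by (auto simp: yd2)
      then show False using r1 x rc by simp
    qed
    then show "x \<in> Pair (0::nat) ` Z" using x rc by (auto simp: Z_def yd2)
  next
    fix x assume "x \<in> Pair (0::nat) ` Z"
    then show "x \<in> {x \<in> young_diagram [a, b]. T x = 0}" by (auto simp: Z_def yd2)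
  qed
  moreover have "card (Pair (0::nat) ` Z) = card Z" by (simp add: card_image inj_on_def)
  moreover have "card {x \<in> young_diagram [a, b]. T x = 0} = n - k"
    using ssytD(4)[OF T, of 0] by (simp add: mu2_def)
  ultimately have "card Z = n - k" by simp
  moreover have "Z = {..<card Z}"
  proof (rule down_closed_eq[OF finZ])
    fix c c' assume "c \<in> Z" "c' \<le> c"
    then have "c < a" "T (0, c) = 0" by (auto simp: Z_def)
    moreover then have "T (0, c') \<le> T (0, c)"
      using ssyt_row_mono[OF T, of 0 c c'] \<open>c' \<le> c\<close> by (simp add: yd2)
    ultimately show "c' \<in> Z" using \<open>c' \<le> c\<close> by (simp add: Z_def)
  qed
  ultimately show "{c. c < a \<and> T (0, c) = 0} = {..<n - k}" by (simp add: Z_def)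
qed

lemma kostka_two_row:
  assumes ab: "a + b = n" "b \<le> a" and k: "2 * k \<le> n"
  shows "kostka [a, b] (mu2 n k) = (if b \<le> k then 1 else 0)"
proof (cases "b \<le> k")
  case False
  have "ssyt [a, b] (mu2 n k) = {}"
  proof (rule ccontr)
    assume "ssyt [a, b] (mu2 n k) \<noteq> {}"
    then obtain T where T: "T \<in> ssyt [a, b] (mu2 n k)" by blast
    have "{c. c < a \<and> T (0, c) = 0} \<subseteq> {..<a}" by auto
    then have "card {..<n - k} \<le> card {..<a}"
      using two_row_structure(3)[OF T ab(2)] by (metis card_mono finite_lessThan)
    then show False using False ab by simp
  qed
  then show ?thesis using False by (simp add: kostka_def)
next
  case True
  define T0 where "T0 = (\<lambda>x. if x \<in> young_diagram [a, b] then
      (if fst x = 0 \<and> snd x < n - k then 0 else (1::nat)) else undefined)"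
  have T0: "T0 \<in> ssyt [a, b] (mu2 n k)"
    unfolding ssyt_def
  proof (intro CollectI conjI allI impI)
    show "T0 \<in> young_diagram [a, b] \<rightarrow>\<^sub>E UNIV" by (auto simp: T0_def PiE_def extensional_def)
  next
    fix i j assume "(i, Suc j) \<in> young_diagram [a, b]"
    then show "T0 (i, j) \<le> T0 (i, Suc j)" by (auto simp: T0_def yd2)
  next
    fix i j assume "(Suc i, j) \<in> young_diagram [a, b]"
    then show "T0 (i, j) < T0 (Suc i, j)" using True ab k by (auto simp: T0_def yd2)
  next
    fix v
    show "card {c \<in> young_diagram [a, b]. T0 c = v} = mu2 n k v"
    proof -
      have Y: "young_diagram [a, b] = Pair (0::nat) ` {..<a} \<union> Pair (1::nat) ` {..<b}"
        by (auto simp: yd2)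
      have Z: "{c \<in> young_diagram [a, b]. T0 c = 0} = Pair (0::nat) ` {..<n - k}"
        using True ab by (auto simp: T0_def yd2)
      have O: "{c \<in> young_diagram [a, b]. T0 c = 1} = Pair (0::nat) ` {n - k..<a} \<union> Pair (1::nat) ` {..<b}"
        using True ab by (auto simp: T0_def yd2)
      have "card (Pair (0::nat) ` {n - k..<a} \<union> Pair (1::nat) ` {..<b}) = card (Pair (0::nat) ` {n - k..<a}) + card (Pair (1::nat) ` {..<b})"
        by (rule card_Un_disjoint) auto
      also have "\<dots> = (a - (n - k)) + b" by (simp add: card_image inj_on_def)
      finally have c1: "card {c \<in> young_diagram [a, b]. T0 c = 1} = k" using O True ab k by simp
      have c0: "card {c \<in> young_diagram [a, b]. T0 c = 0} = n - k" using Z by (simp add: card_image inj_on_def)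
      have "{c \<in> young_diagram [a, b]. T0 c = v} = {}" if "v \<ge> 2"
        using that by (auto simp: T0_def)
      then show ?thesis using c0 c1 by (cases "v = 0"; cases "v = 1") (auto simp: mu2_def)
    qed
  qed
  have uniq: "T = T0" if T: "T \<in> ssyt [a, b] (mu2 n k)" for T
  proof
    fix x
    show "T x = T0 x"
    proof (cases "x \<in> young_diagram [a, b]")
      case False then show ?thesis using ssyt_ext[OF T False] by (simp add: T0_def)
    next
      case True
      obtain r c where rc: "x = (r, c)" by force
      note st = two_row_structure[OF T ab(2)]
      show ?thesis
      proof (cases "r = 0")
        case r0: True
        then have ca: "c < a" using True rc by (simp add: yd2)
        have "T (0, c) = 0 \<longleftrightarrow> c < n - k" using st(3) ca by blast
        then show ?thesis using st(2)[OF ca] r0 rc True ca by (auto simp: T0_def)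
      next
        case False
        then have "r = 1" "c < b" using True rc by (auto simp: yd2)
        then show ?thesis using st(1) rc True by (simp add: T0_def)
      qed
    qed
  qed
  have "ssyt [a, b] (mu2 n k) = {T0}" using T0 uniq by blast
  then show ?thesis using True by (simp add: kostka_def)
qed

lemma kostka_long:
  assumes P: "is_partition la" and l: "3 \<le> length la"
  shows "kostka la (mu2 n k) = 0"
proof -
  have "ssyt la (mu2 n k) = {}"
  proof (rule ccontr)
    assume "ssyt la (mu2 n k) \<noteq> {}"
    then obtain T where T: "T \<in> ssyt la (mu2 n k)" by blast
    have x: "(2, 0) \<in> young_diagram la" using partition_pos[OF P, of 2] l by (simp add: yd_mem)
    have "2 \<le> T (2, 0)" using ssyt_ge_row[OF P T x] by simp
    moreover have "0 < mu2 n k (T (2, 0))" using ssyt_val_pos[OF T x] .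
    ultimately show False by (simp add: mu2_def)
  qed
  then show ?thesis by (simp add: kostka_def)
qed

lemma partition_le2:
  assumes la: "la \<in> partitions_of n" and l: "length la \<le> 2" and n: "1 \<le> n"
  shows "\<exists>j. 2 * j \<le> n \<and> la = g2 n j"
proof -
  have P: "is_partition la" "sum_list la = n" using la by (auto simp: partitions_of_def)
  consider "la = []" | x where "la = [x]" | x y where "la = [x, y]"
    using l by (cases la; cases "tl la") auto
  then show ?thesis
  proof cases
    case 1 then show ?thesis using P n by simp
  next
    case 2 then show ?thesis using P by (intro exI[of _ 0]) (simp add: g2_def)
  next
    case 3
    then have "y \<le> x" "0 < y" using P(1) by (auto simp: is_partition_def)
    then show ?thesis using 3 P by (intro exI[of _ y]) (auto simp: g2_def)
  qed
qed

lemma g2_partition: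
  assumes "2 * j \<le> n" "1 \<le> n"
  shows "g2 n j \<in> partitions_of n"
  using assms by (auto simp: g2_def partitions_of_def is_partition_def)

lemma g2_inj: "g2 n i = g2 n j \<Longrightarrow> i = j"
  by (auto simp: g2_def split: if_splits)

lemma kostka_mu2:
  assumes la: "la \<in> partitions_of n" and k: "2 * k \<le> n" and n: "1 \<le> n"
  shows "kostka la (mu2 n k) = (if la \<in> g2 n ` {..k} then 1 else 0)"
proof (cases "length la \<le> 2")
  case False
  then have "la \<notin> g2 n ` {..k}" by (auto simp: g2_def)
  then show ?thesis using kostka_long[of la n k] la False by (simp add: partitions_of_def)
next
  case True
  obtain j where j: "2 * j \<le> n" "la = g2 n j" using partition_le2[OF la True n] by blast
  have "la \<in> g2 n ` {..k} \<longleftrightarrow> j \<le> k" using j g2_inj by auto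
  moreover have "kostka la (mu2 n k) = (if j \<le> k then 1 else 0)"
  proof (cases "j = 0")
    case True
    then show ?thesis using j kostka_two_row[of n 0 n k] k by (simp add: g2_def kostka_single)
  next
    case False
    then show ?thesis using j kostka_two_row[of "n - j" j n k] k by (simp add: g2_def)
  qed
  ultimately show ?thesis by simp
qed

lemma expansion_mu2:
  assumes c: "schur_expansion n f c" and k: "2 * k \<le> n" and n: "1 \<le> n"
  shows "f (mu2 n k) = (\<Sum>j\<le>k. c (g2 n j))"
proof -
  have "f (mu2 n k) = (\<Sum>la\<in>partitions_of n. c la * kostka la (mu2 n k))"
    using c mu2_fin_supp unfolding schur_expansion_def by blast
  also have "\<dots> = (\<Sum>la\<in>partitions_of n. if la \<in> g2 n ` {..k} then c la else 0)"
    using kostka_mu2[OF _ k n] by (intro sum.cong) auto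
  also have "\<dots> = (\<Sum>la\<in>g2 n ` {..k}. c la)"
  proof -
    have sub: "g2 n ` {..k} \<subseteq> partitions_of n" using g2_partition k n by auto
    have "(\<Sum>la\<in>partitions_of n. if la \<in> g2 n ` {..k} then c la else 0) = (\<Sum>la\<in>partitions_of n \<inter> g2 n ` {..k}. c la)"
      by (simp add: sum.inter_restrict finite_partitions)
    also have "partitions_of n \<inter> g2 n ` {..k} = g2 n ` {..k}" using sub by blast
    finally show ?thesis .
  qed
  also have "\<dots> = (\<Sum>j\<le>k. c (g2 n j))"
    by (rule sum.reindex_cong[where l = "g2 n"]) (auto simp: inj_on_def g2_inj)
  finally show ?thesis .
qed

lemma coeff_formula:
  assumes c: "schur_expansion n f c" and n: "1 \<le> n"
  shows "c (g2 n 0) = f (mu2 n 0)"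
    "1 \<le> k \<Longrightarrow> 2 * k \<le> n \<Longrightarrow> c (g2 n k) = f (mu2 n k) - f (mu2 n (k - 1))"
proof -
  show "c (g2 n 0) = f (mu2 n 0)" using expansion_mu2[OF c _ n, of 0] by simp
  assume k: "1 \<le> k" "2 * k \<le> n"
  then obtain k' where k': "k = Suc k'" by (cases k) auto
  have "f (mu2 n k) = (\<Sum>j\<le>k. c (g2 n j))" using expansion_mu2[OF c k(2) n] .
  moreover have "f (mu2 n (k - 1)) = (\<Sum>j\<le>k'. c (g2 n j))" using expansion_mu2[OF c _ n, of k'] k k' by simp
  ultimately show "c (g2 n k) = f (mu2 n k) - f (mu2 n (k - 1))" using k' by simp
qed

theorem two_s_pos_iff:
  assumes sym: "symmetric_fn f" and hom: "homog n f" and n: "1 \<le> n" and nn: "\<And>e. 0 \<le> f e"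
  shows "two_s_positive n f \<longleftrightarrow> (\<forall>k. 1 \<le> k \<longrightarrow> 2 * k \<le> n \<longrightarrow> f (mu2 n (k - 1)) \<le> f (mu2 n k))"
proof -
  let ?c = "schur_coeff n f"
  have c: "schur_expansion n f ?c" by (rule schur_coeff_expansion[OF sym hom])
  show ?thesis
  proof
    assume pos: "two_s_positive n f"
    show "\<forall>k. 1 \<le> k \<longrightarrow> 2 * k \<le> n \<longrightarrow> f (mu2 n (k - 1)) \<le> f (mu2 n k)"
    proof (intro allI impI)
      fix k assume k: "1 \<le> k" "2 * k \<le> n"
      have "is_partition (g2 n k)" "length (g2 n k) \<le> 2"
        using g2_partition[OF k(2) n] by (auto simp: partitions_of_def g2_def)
      then have "0 \<le> ?c (g2 n k)" using pos unfolding two_s_positive_def by blast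
      then show "f (mu2 n (k - 1)) \<le> f (mu2 n k)" using coeff_formula(2)[OF c n k] by simp
    qed
  next
    assume mono: "\<forall>k. 1 \<le> k \<longrightarrow> 2 * k \<le> n \<longrightarrow> f (mu2 n (k - 1)) \<le> f (mu2 n k)"
    show "two_s_positive n f"
      unfolding two_s_positive_def
    proof (intro allI impI)
      fix la assume la: "is_partition la \<and> length la \<le> 2"
      show "0 \<le> ?c la"
      proof (cases "la \<in> partitions_of n")
        case False
        then show ?thesis using c unfolding schur_expansion_def by simp
      next
        case True
        obtain j where j: "2 * j \<le> n" "la = g2 n j" using partition_le2[OF True _ n] la by blast
        show ?thesis
        proof (cases "j = 0")
          case True
          then show ?thesis using j coeff_formula(1)[OF c n] nn by simp
        next
          case False
          then show ?thesis using j coeff_formula(2)[OF c n, of j] mono by simp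
        qed
      qed
    qed
  qed
qed


section \<open>Properties of the chromatic symmetric function\<close>

definition colset :: "'a set \<Rightarrow> ('a \<Rightarrow> 'a \<Rightarrow> bool) \<Rightarrow> (nat \<Rightarrow> nat) \<Rightarrow> ('a \<Rightarrow> nat) set" where
  "colset V E e = {\<kappa> \<in> V \<rightarrow>\<^sub>E UNIV. proper_colouring V E \<kappa> \<and> (\<forall>i. card {v\<in>V. \<kappa> v = i} = e i)}"

lemma chromatic_colset: "chromatic_sym V E e = int (card (colset V E e))"
  by (simp add: chromatic_sym_def colset_def)

lemma chromatic_symmetric: "symmetric_fn (chromatic_sym V E)"
  unfolding symmetric_fn_def
proof (intro allI impI)
  fix N p e assume p: "p permutes ({..<N}::nat set)"
  have bp: "bij p" using p by (rule permutes_bij)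
  have pi1: "p (inv p x) = x" for x by (rule permutes_inverses(1)[OF p])
  have pi2: "inv p (p x) = x" for x by (rule permutes_inverses(2)[OF p])
  define phi where "phi \<kappa> = (\<lambda>v. if v \<in> V then inv p (\<kappa> v) else undefined)" for \<kappa> :: "'a \<Rightarrow> nat"
  define psi where "psi \<kappa> = (\<lambda>v. if v \<in> V then p (\<kappa> v) else undefined)" for \<kappa> :: "'a \<Rightarrow> nat"
  have "bij_betw phi (colset V E e) (colset V E (e \<circ> p))"
  proof (rule bij_betw_byWitness[where f' = psi])
    show "\<forall>a\<in>colset V E e. psi (phi a) = a"
      by (auto simp: colset_def phi_def psi_def pi1 fun_eq_iff PiE_def extensional_def)
    show "\<forall>a'\<in>colset V E (e \<circ> p). phi (psi a') = a'"
      by (auto simp: colset_def phi_def psi_def pi2 fun_eq_iff PiE_def extensional_def)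
    show "phi ` colset V E e \<subseteq> colset V E (e \<circ> p)"
    proof safe
      fix \<kappa> assume k: "\<kappa> \<in> colset V E e"
      have "{v\<in>V. phi \<kappa> v = i} = {v\<in>V. \<kappa> v = p i}" for i
        using pi1 pi2 by (auto simp: phi_def)
      then show "phi \<kappa> \<in> colset V E (e \<circ> p)" using k
        by (auto simp: colset_def phi_def proper_colouring_def PiE_def extensional_def) (metis pi1)
    qed
    show "psi ` colset V E (e \<circ> p) \<subseteq> colset V E e"
    proof safe
      fix \<kappa> assume k: "\<kappa> \<in> colset V E (e \<circ> p)"
      have "{v\<in>V. psi \<kappa> v = i} = {v\<in>V. \<kappa> v = inv p i}" for i
        using pi1 pi2 by (auto simp: psi_def)
      then have "card {v\<in>V. psi \<kappa> v = i} = e i" for i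
        using k by (auto simp: colset_def pi1)
      then show "psi \<kappa> \<in> colset V E e" using k
        by (auto simp: colset_def psi_def proper_colouring_def PiE_def extensional_def) (metis pi2)
    qed
  qed
  then show "chromatic_sym V E (e \<circ> p) = chromatic_sym V E e"
    by (simp add: chromatic_colset bij_betw_same_card)
qed

lemma chromatic_homog:
  assumes fin: "finite V"
  shows "homog (card V) (chromatic_sym V E)"
  unfolding homog_def
proof (intro allI impI)
  fix la assume P: "is_partition la" and s: "sum_list la \<noteq> card V"
  have "colset V E (pc la) = {}"
  proof (rule ccontr)
    assume "colset V E (pc la) \<noteq> {}"
    then obtain \<kappa> where k: "\<kappa> \<in> colset V E (pc la)" by blast
    have cls: "card {v\<in>V. \<kappa> v = i} = pc la i" for i using k by (simp add: colset_def)
    have "\<kappa> v < length la" if "v \<in> V" for v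
    proof (rule ccontr)
      assume "\<not> \<kappa> v < length la"
      then have "card {w\<in>V. \<kappa> w = \<kappa> v} = 0" using cls by (simp add: pc_def)
      moreover have "v \<in> {w\<in>V. \<kappa> w = \<kappa> v}" using that by simp
      ultimately show False using fin by auto
    qed
    then have "V = (\<Union>i\<in>{..<length la}. {v\<in>V. \<kappa> v = i})" by auto
    moreover have "card (\<Union>i\<in>{..<length la}. {v\<in>V. \<kappa> v = i}) = (\<Sum>i<length la. card {v\<in>V. \<kappa> v = i})"
      by (rule card_UN_disjoint) (auto simp: fin)
    ultimately have "card V = (\<Sum>i<length la. card {v\<in>V. \<kappa> v = i})" by simp
    also have "\<dots> = (\<Sum>i<length la. pc la i)" using cls by simp
    also have "\<dots> = sum_list la" using sum_pc[of la "length la"] by simp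
    finally show False using s by simp
  qed
  then show "chromatic_sym V E (pc la) = 0" by (simp add: chromatic_colset)
qed

definition indep :: "('a \<Rightarrow> 'a \<Rightarrow> bool) \<Rightarrow> 'a set \<Rightarrow> bool" where
  "indep E A \<longleftrightarrow> (\<forall>u\<in>A. \<forall>v\<in>A. \<not> E u v)"

definition QS :: "'a set \<Rightarrow> ('a \<Rightarrow> 'a \<Rightarrow> bool) \<Rightarrow> nat \<Rightarrow> 'a set set" where
  "QS V E k = {A. A \<subseteq> V \<and> indep E A \<and> indep E (V - A) \<and> card A = k}"

definition Q :: "'a set \<Rightarrow> ('a \<Rightarrow> 'a \<Rightarrow> bool) \<Rightarrow> nat \<Rightarrow> nat" where
  "Q V E k = card (QS V E k)"

lemma chromatic_mu2:
  assumes fin: "finite V" and k: "k \<le> card V"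
  shows "chromatic_sym V E (mu2 (card V) k) = int (Q V E k)"
proof -
  define phi where "phi \<kappa> = {v\<in>V. \<kappa> v = (1::nat)}" for \<kappa> :: "'a \<Rightarrow> nat"
  define psi where "psi A = (\<lambda>v. if v \<in> V then (if v \<in> A then 1 else 0::nat) else undefined)" for A :: "'a set"
  have vals: "\<kappa> v = 0 \<or> \<kappa> v = 1" if kk: "\<kappa> \<in> colset V E (mu2 (card V) k)" and v: "v \<in> V" for \<kappa> v
  proof (rule ccontr)
    assume "\<not> (\<kappa> v = 0 \<or> \<kappa> v = 1)"
    then have "card {w\<in>V. \<kappa> w = \<kappa> v} = 0" using kk by (simp add: colset_def mu2_def)
    moreover have "v \<in> {w\<in>V. \<kappa> w = \<kappa> v}" using v by simp
    ultimately show False using fin by auto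
  qed
  have "bij_betw phi (colset V E (mu2 (card V) k)) (QS V E k)"
  proof (rule bij_betw_byWitness[where f' = psi])
    show "\<forall>a\<in>colset V E (mu2 (card V) k). psi (phi a) = a"
    proof
      fix \<kappa> assume kk: "\<kappa> \<in> colset V E (mu2 (card V) k)"
      show "psi (phi \<kappa>) = \<kappa>"
      proof
        fix v show "psi (phi \<kappa>) v = \<kappa> v"
          using vals[OF kk, of v] kk by (auto simp: psi_def phi_def colset_def PiE_def extensional_def)
      qed
    qed
    show "\<forall>a'\<in>QS V E k. phi (psi a') = a'"
      by (auto simp: QS_def phi_def psi_def)
    show "phi ` colset V E (mu2 (card V) k) \<subseteq> QS V E k"
    proof safe
      fix \<kappa> assume kk: "\<kappa> \<in> colset V E (mu2 (card V) k)"
      have pr: "proper_colouring V E \<kappa>" using kk by (simp add: colset_def)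
      have c1: "card {v\<in>V. \<kappa> v = 1} = k" using kk by (simp add: colset_def mu2_def)
      have "V - phi \<kappa> = {v\<in>V. \<kappa> v = 0}" using vals[OF kk] by (auto simp: phi_def)
      moreover have "indep E (phi \<kappa>)" unfolding indep_def phi_def
      proof (intro ballI notI)
        fix u v assume a: "u \<in> {v \<in> V. \<kappa> v = 1}" "v \<in> {v \<in> V. \<kappa> v = 1}" "E u v"
        then have "u \<in> V" "v \<in> V" by auto
        then have "\<kappa> u \<noteq> \<kappa> v" using pr a(3) unfolding proper_colouring_def by blast
        then show False using a by simp
      qed
      moreover have "indep E {v\<in>V. \<kappa> v = 0}" unfolding indep_def
      proof (intro ballI notI)
        fix u v assume a: "u \<in> {v \<in> V. \<kappa> v = 0}" "v \<in> {v \<in> V. \<kappa> v = 0}" "E u v"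
        then have "u \<in> V" "v \<in> V" by auto
        then have "\<kappa> u \<noteq> \<kappa> v" using pr a(3) unfolding proper_colouring_def by blast
        then show False using a by simp
      qed
      ultimately show "phi \<kappa> \<in> QS V E k" using c1 by (auto simp: QS_def phi_def)
    qed
    show "psi ` QS V E k \<subseteq> colset V E (mu2 (card V) k)"
    proof safe
      fix A assume A: "A \<in> QS V E k"
      have AV: "A \<subseteq> V" "card A = k" "indep E A" "indep E (V - A)" using A by (auto simp: QS_def)
      have pr: "proper_colouring V E (psi A)"
        using AV unfolding proper_colouring_def indep_def psi_def by auto
      have cl: "card {v\<in>V. psi A v = i} = mu2 (card V) k i" for i
      proof -
        have "{v\<in>V. psi A v = i} = (if i = 0 then V - A else if i = 1 then A else {})"
          using AV by (auto simp: psi_def)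
        then show ?thesis using AV fin by (simp add: mu2_def card_Diff_subset finite_subset)
      qed
      show "psi A \<in> colset V E (mu2 (card V) k)"
        using pr cl by (auto simp: colset_def psi_def PiE_def extensional_def)
    qed
  qed
  then show ?thesis by (simp add: chromatic_colset Q_def bij_betw_same_card)
qed

theorem chrom_pos_iff:
  assumes fin: "finite V" and ne: "V \<noteq> {}"
  shows "chrom_two_s_positive V E \<longleftrightarrow> (\<forall>k. 1 \<le> k \<longrightarrow> 2 * k \<le> card V \<longrightarrow> Q V E (k - 1) \<le> Q V E k)"
proof -
  have n: "1 \<le> card V" using fin ne by (simp add: Suc_le_eq card_gt_0_iff)
  have "chrom_two_s_positive V E \<longleftrightarrow>
      (\<forall>k. 1 \<le> k \<longrightarrow> 2 * k \<le> card V \<longrightarrow> chromatic_sym V E (mu2 (card V) (k - 1)) \<le> chromatic_sym V E (mu2 (card V) k))"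
    unfolding chrom_two_s_positive_def
    by (rule two_s_pos_iff[OF chromatic_symmetric chromatic_homog[OF fin] n]) (simp add: chromatic_sym_def)
  also have "\<dots> \<longleftrightarrow> (\<forall>k. 1 \<le> k \<longrightarrow> 2 * k \<le> card V \<longrightarrow> Q V E (k - 1) \<le> Q V E k)"
    using chromatic_mu2[OF fin] by simp
  finally show ?thesis .
qed


section \<open>Symmetric unimodal sequences and convolution\<close>

definition conv :: "(nat \<Rightarrow> nat) \<Rightarrow> (nat \<Rightarrow> nat) \<Rightarrow> nat \<Rightarrow> nat" where
  "conv p q k = (\<Sum>j\<le>k. p j * q (k - j))"

definition SU :: "nat \<Rightarrow> (nat \<Rightarrow> nat) \<Rightarrow> bool" where
  "SU n p \<longleftrightarrow> (\<forall>k>n. p k = 0) \<and> (\<forall>k\<le>n. p (n - k) = p k) \<and>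
     (\<forall>k. 1 \<le> k \<longrightarrow> 2 * k \<le> n \<longrightarrow> p (k - 1) \<le> p k)"

definition ind :: "nat \<Rightarrow> nat \<Rightarrow> nat \<Rightarrow> nat" where
  "ind n a k = (if a \<le> k \<and> k + a \<le> n then 1 else 0)"

lemma SU_chain:
  assumes "SU n p" "j \<le> k" "2 * k \<le> n"
  shows "p j \<le> p k"
  using assms(2,3)
proof (induction k)
  case 0 then show ?case by simp
next
  case (Suc k)
  show ?case
  proof (cases "j = Suc k")
    case True then show ?thesis by simp
  next
    case False
    then have "p j \<le> p k" using Suc by simp
    moreover have "p k \<le> p (Suc k)" using assms(1) Suc(3) unfolding SU_def
      by (metis diff_Suc_1 le_add1 plus_1_eq_Suc)
    ultimately show ?thesis by simp
  qed
qed

lemma SU_zero: "SU n (\<lambda>_. 0)"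
  by (simp add: SU_def)

lemma SU_add: "SU n p \<Longrightarrow> SU n q \<Longrightarrow> SU n (\<lambda>k. p k + q k)"
  unfolding SU_def by (auto intro: add_mono)

lemma conv_add_left: "conv (\<lambda>k. p k + p' k) q = (\<lambda>k. conv p q k + conv p' q k)"
  by (auto simp: conv_def fun_eq_iff algebra_simps sum.distrib)

lemma conv_add_right: "conv p (\<lambda>k. q k + q' k) = (\<lambda>k. conv p q k + conv p q' k)"
  by (auto simp: conv_def fun_eq_iff algebra_simps sum.distrib)

lemma conv_zero_left: "conv (\<lambda>_. 0) q = (\<lambda>_. 0)"
  by (simp add: conv_def fun_eq_iff)

lemma conv_zero_right: "conv p (\<lambda>_. 0) = (\<lambda>_. 0)"
  by (simp add: conv_def fun_eq_iff)

lemma SU_ind: "2 * a \<le> n \<Longrightarrow> SU n (ind n a)"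
  unfolding SU_def ind_def by auto

lemma SU_decomp:
  assumes S: "SU n p" and nz: "\<exists>k. p k \<noteq> 0"
  shows "\<exists>a. 2 * a \<le> n \<and> (\<forall>k. ind n a k \<le> p k) \<and> SU n (\<lambda>k. p k - ind n a k)
           \<and> (\<Sum>k\<le>n. p k - ind n a k) < (\<Sum>k\<le>n. p k)"
proof -
  define a where "a = (LEAST k. p k \<noteq> 0)"
  have pa: "p a \<noteq> 0" using nz unfolding a_def by (rule LeastI_ex)
  have below: "p k = 0" if "k < a" for k using that unfolding a_def using not_less_Least by blast
  have zero: "\<forall>k>n. p k = 0" and sym: "\<forall>k\<le>n. p (n - k) = p k"
    and mono: "\<forall>k. 1 \<le> k \<longrightarrow> 2 * k \<le> n \<longrightarrow> p (k - 1) \<le> p k" using S unfolding SU_def by auto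
  have an: "a \<le> n" using zero pa by (meson not_le)
  have a2: "2 * a \<le> n"
  proof (rule ccontr)
    assume "\<not> 2 * a \<le> n"
    then have "n - a < a" using an by linarith
    then have "p (n - a) = 0" by (rule below)
    then show False using sym an pa by simp
  qed
  have ge: "1 \<le> p k" if "a \<le> k" "k + a \<le> n" for k
  proof (cases "2 * k \<le> n")
    case True
    then have "p a \<le> p k" using SU_chain[OF S that(1)] by simp
    then show ?thesis using pa by simp
  next
    case False
    have "p a \<le> p (n - k)" using SU_chain[OF S, of a "n - k"] that False by simp
    moreover have "p (n - k) = p k" using sym that by simp
    ultimately show ?thesis using pa by simp
  qed
  have le: "ind n a k \<le> p k" for k using ge by (simp add: ind_def)
  have SU': "SU n (\<lambda>k. p k - ind n a k)"
    unfolding SU_def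
  proof (intro conjI allI impI)
    fix k assume "n < k" then show "p k - ind n a k = 0" using zero by simp
  next
    fix k assume k: "k \<le> n"
    have "ind n a (n - k) = ind n a k" using k by (auto simp: ind_def)
    then show "p (n - k) - ind n a (n - k) = p k - ind n a k" using sym k by simp
  next
    fix k assume k: "1 \<le> k" "2 * k \<le> n"
    show "p (k - 1) - ind n a (k - 1) \<le> p k - ind n a k"
    proof (cases "a \<le> k - 1")
      case True
      then have "ind n a (k - 1) = 1" "ind n a k = 1" using k a2 by (auto simp: ind_def)
      moreover have "p (k - 1) \<le> p k" using mono k by blast
      ultimately show ?thesis by simp
    next
      case False
      then have "p (k - 1) = 0" using below k by simp
      then show ?thesis by simp
    qed
  qed
  have "(\<Sum>k\<le>n. p k - ind n a k) < (\<Sum>k\<le>n. p k)"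
  proof (rule sum_strict_mono_ex1)
    show "finite {..n}" by simp
    show "\<forall>x\<in>{..n}. p x - ind n a x \<le> p x" by simp
    have "ind n a a = 1" using a2 by (simp add: ind_def)
    then show "\<exists>x\<in>{..n}. p x - ind n a x < p x" using an pa by (intro bexI[of _ a]) auto
  qed
  then show ?thesis using a2 le SU' by blast
qed

lemma decomp_eq: "(\<forall>k. ind n a k \<le> p k) \<Longrightarrow> p = (\<lambda>k. ind n a k + (p k - ind n a k))"
  by (auto simp: fun_eq_iff)

lemma sum_indicator: "(\<Sum>j\<le>(k::nat). (if P j then 1 else 0 :: nat)) = card {j. j \<le> k \<and> P j}"
proof -
  have "(\<Sum>j\<le>k. (if P j then 1 else 0 :: nat)) = (\<Sum>j\<in>{j \<in> {..k}. P j}. 1)"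
    by (rule sum.inter_filter[symmetric]) simp
  moreover have "{j \<in> {..k}. P j} = {j. j \<le> k \<and> P j}" by auto
  ultimately show ?thesis by simp
qed

lemma conv_ind_ind:
  assumes a: "2 * a \<le> n" and b: "2 * b \<le> m"
  shows "SU (n + m) (conv (ind n a) (ind m b))"
proof -
  define S where "S k = {j. j \<le> k \<and> (a \<le> j \<and> j + a \<le> n) \<and> (b \<le> k - j \<and> k - j + b \<le> m)}" for k
  have cv: "conv (ind n a) (ind m b) k = card (S k)" for k
  proof -
    have "conv (ind n a) (ind m b) k = (\<Sum>j\<le>k. (if (a \<le> j \<and> j + a \<le> n) \<and> (b \<le> k - j \<and> k - j + b \<le> m) then 1 else 0 :: nat))"
      unfolding conv_def ind_def by (intro sum.cong) auto
    then show ?thesis unfolding sum_indicator S_def .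
  qed
  have interval: "S k = (if b \<le> k then {max a (k + b - m) .. min (n - a) (k - b)} else {})" for k
    unfolding S_def using a b by (auto simp: max_def min_def)
  have cardS: "card (S k) = (if b \<le> k then Suc (min (n - a) (k - b)) - max a (k + b - m) else 0)" for k
    by (simp add: interval)
  show ?thesis
    unfolding SU_def cv
  proof (intro conjI allI impI)
    fix k assume "n + m < k"
    then have "S k = {}" unfolding S_def by auto
    then show "card (S k) = 0" by simp
  next
    fix k assume k: "k \<le> n + m"
    have "bij_betw (\<lambda>j. n - j) (S k) (S (n + m - k))"
    proof (rule bij_betw_byWitness[where f' = "\<lambda>j. n - j"])
      show "\<forall>x\<in>S k. n - (n - x) = x" unfolding S_def by auto
      show "\<forall>x\<in>S (n + m - k). n - (n - x) = x" unfolding S_def by auto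
      show "(\<lambda>j. n - j) ` S k \<subseteq> S (n + m - k)" using k unfolding S_def by auto
      show "(\<lambda>j. n - j) ` S (n + m - k) \<subseteq> S k" using k unfolding S_def by auto
    qed
    then show "card (S (n + m - k)) = card (S k)" by (simp add: bij_betw_same_card)
  next
    fix k assume k: "1 \<le> k" "2 * k \<le> n + m"
    obtain K where K: "k = Suc K" using k by (cases k) auto
    show "card (S (k - 1)) \<le> card (S k)"
    proof (cases "b \<le> K")
      case False
      then show ?thesis unfolding cardS K by simp
    next
      case True
      define u where "u = min (n - a) (K - b)"
      define u' where "u' = min (n - a) (Suc K - b)"
      define l where "l = max a (K + b - m)"
      define l' where "l' = max a (Suc K + b - m)"
      have f1: "u \<le> u'" "u' \<le> Suc u" using True unfolding u_def u'_def by auto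
      have f2: "l \<le> l'" "l' \<le> Suc l" unfolding l_def l'_def by auto
      have f3: "u' = Suc u \<or> l' = l"
      proof (cases "Suc K - b \<le> n - a")
        case True
        then show ?thesis using \<open>b \<le> K\<close> unfolding u_def u'_def by auto
      next
        case False
        then have "Suc K + b \<le> m + a" using k K \<open>b \<le> K\<close> by linarith
        then show ?thesis unfolding l_def l'_def by auto
      qed
      have "Suc u - l \<le> Suc u' - l'" using f1 f2 f3 by linarith
      then show ?thesis unfolding cardS K using True by (simp add: u_def u'_def l_def l'_def)
    qed
  qed
qed

lemma conv_ind_SU:
  assumes a: "2 * a \<le> n"
  shows "SU m q \<Longrightarrow> SU (n + m) (conv (ind n a) q)"
proof (induction "\<Sum>k\<le>m. q k" arbitrary: q rule: less_induct)
  case less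
  show ?case
  proof (cases "\<exists>k. q k \<noteq> 0")
    case False
    then have "q = (\<lambda>_. 0)" by auto
    then show ?thesis using SU_zero by (simp add: conv_zero_right)
  next
    case True
    obtain b where b: "2 * b \<le> m" "\<forall>k. ind m b k \<le> q k" "SU m (\<lambda>k. q k - ind m b k)"
        "(\<Sum>k\<le>m. q k - ind m b k) < (\<Sum>k\<le>m. q k)"
      using SU_decomp[OF less(2) True] by blast
    have eq: "(\<lambda>k. ind m b k + (q k - ind m b k)) = q" using b(2) by (auto simp: fun_eq_iff)
    have "conv (ind n a) q = conv (ind n a) (\<lambda>k. ind m b k + (q k - ind m b k))"
      by (simp only: eq)
    also have "\<dots> = (\<lambda>k. conv (ind n a) (ind m b) k + conv (ind n a) (\<lambda>k. q k - ind m b k) k)"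
      by (rule conv_add_right)
    finally show ?thesis using SU_add[OF conv_ind_ind[OF a b(1)] less(1)[OF b(4) b(3)]] by simp
  qed
qed

lemma conv_SU:
  shows "SU n p \<Longrightarrow> SU m q \<Longrightarrow> SU (n + m) (conv p q)"
proof (induction "\<Sum>k\<le>n. p k" arbitrary: p rule: less_induct)
  case less
  show ?case
  proof (cases "\<exists>k. p k \<noteq> 0")
    case False
    then have "p = (\<lambda>_. 0)" by auto
    then show ?thesis using SU_zero by (simp add: conv_zero_left)
  next
    case True
    obtain a where a: "2 * a \<le> n" "\<forall>k. ind n a k \<le> p k" "SU n (\<lambda>k. p k - ind n a k)"
        "(\<Sum>k\<le>n. p k - ind n a k) < (\<Sum>k\<le>n. p k)"
      using SU_decomp[OF less(2) True] by blast
    have eq: "(\<lambda>k. ind n a k + (p k - ind n a k)) = p" using a(2) by (auto simp: fun_eq_iff)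
    have "conv p q = conv (\<lambda>k. ind n a k + (p k - ind n a k)) q"
      by (simp only: eq)
    also have "\<dots> = (\<lambda>k. conv (ind n a) q k + conv (\<lambda>k. p k - ind n a k) q k)"
      by (rule conv_add_left)
    finally show ?thesis using SU_add[OF conv_ind_SU[OF a(1) less(3)] less(1)[OF a(4) a(3) less(3)]] by simp
  qed
qed


lemma QS_sub: "QS S E k \<subseteq> Pow S"
  by (auto simp: QS_def)

lemma finite_QS: "finite S \<Longrightarrow> finite (QS S E k)"
  by (rule finite_subset[OF QS_sub]) simp

lemma Q_union:
  assumes f1: "finite S1" and f2: "finite S2" and dis: "S1 \<inter> S2 = {}"
    and ne: "\<And>u v. u \<in> S1 \<Longrightarrow> v \<in> S2 \<Longrightarrow> \<not> E u v \<and> \<not> E v u"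
  shows "Q (S1 \<union> S2) E = conv (Q S1 E) (Q S2 E)"
proof
  fix k
  define X where "X = (\<Union>j\<in>{..k}. QS S1 E j \<times> QS S2 E (k - j))"
  have cardX: "card X = (\<Sum>j\<le>k. Q S1 E j * Q S2 E (k - j))"
    unfolding X_def
  proof (subst card_UN_disjoint)
    show "finite {..k}" by simp
    show "\<forall>i\<in>{..k}. finite (QS S1 E i \<times> QS S2 E (k - i))" using f1 f2 finite_QS by blast
    show "\<forall>i\<in>{..k}. \<forall>j\<in>{..k}. i \<noteq> j \<longrightarrow> (QS S1 E i \<times> QS S2 E (k - i)) \<inter> (QS S1 E j \<times> QS S2 E (k - j)) = {}"
      by (auto simp: QS_def)
    show "(\<Sum>i\<le>k. card (QS S1 E i \<times> QS S2 E (k - i))) = (\<Sum>j\<le>k. Q S1 E j * Q S2 E (k - j))"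
      by (simp add: Q_def card_cartesian_product)
  qed
  have indep_sub: "indep E B" if "indep E A" "B \<subseteq> A" for A B
    using that by (auto simp: indep_def)
  have indep_un: "indep E (A1 \<union> A2)" if "indep E A1" "indep E A2" "A1 \<subseteq> S1" "A2 \<subseteq> S2" for A1 A2
    using that ne unfolding indep_def by blast
  have "bij_betw (\<lambda>A. (A \<inter> S1, A \<inter> S2)) (QS (S1 \<union> S2) E k) X"
  proof (rule bij_betw_byWitness[where f' = "\<lambda>(A1, A2). A1 \<union> A2"])
    show "\<forall>a\<in>QS (S1 \<union> S2) E k. (\<lambda>(A1, A2). A1 \<union> A2) (a \<inter> S1, a \<inter> S2) = a"
      by (auto simp: QS_def)
    show "\<forall>a'\<in>X. (\<lambda>A. (A \<inter> S1, A \<inter> S2)) ((\<lambda>(A1, A2). A1 \<union> A2) a') = a'"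
      using dis by (auto simp: X_def QS_def)
    show "(\<lambda>A. (A \<inter> S1, A \<inter> S2)) ` QS (S1 \<union> S2) E k \<subseteq> X"
    proof safe
      fix A assume A: "A \<in> QS (S1 \<union> S2) E k"
      then have AS: "A \<subseteq> S1 \<union> S2" "indep E A" "indep E (S1 \<union> S2 - A)" "card A = k"
        by (auto simp: QS_def)
      have "card A = card (A \<inter> S1) + card (A \<inter> S2)"
      proof -
        have "A = (A \<inter> S1) \<union> (A \<inter> S2)" using AS(1) by blast
        moreover have "finite (A \<inter> S1)" "finite (A \<inter> S2)" using f1 f2 by auto
        ultimately show ?thesis using dis by (metis card_Un_disjoint inf_assoc inf_bot_right inf_commute inf_left_commute)
      qed
      then have c: "card (A \<inter> S1) \<le> k" "card (A \<inter> S2) = k - card (A \<inter> S1)" using AS(4) by auto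
      have "A \<inter> S1 \<in> QS S1 E (card (A \<inter> S1))"
        using AS indep_sub[of A "A \<inter> S1"] indep_sub[of "S1 \<union> S2 - A" "S1 - A \<inter> S1"] by (auto simp: QS_def)
      moreover have "A \<inter> S2 \<in> QS S2 E (k - card (A \<inter> S1))"
        using AS c indep_sub[of A "A \<inter> S2"] indep_sub[of "S1 \<union> S2 - A" "S2 - A \<inter> S2"] by (auto simp: QS_def)
      ultimately show "(A \<inter> S1, A \<inter> S2) \<in> X" using c unfolding X_def by blast
    qed
    show "(\<lambda>(A1, A2). A1 \<union> A2) ` X \<subseteq> QS (S1 \<union> S2) E k"
    proof safe
      fix A1 A2 assume "(A1, A2) \<in> X"
      then obtain j where j: "j \<le> k" "A1 \<in> QS S1 E j" "A2 \<in> QS S2 E (k - j)" unfolding X_def by blast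
      then have a: "A1 \<subseteq> S1" "A2 \<subseteq> S2" "indep E A1" "indep E A2" "indep E (S1 - A1)" "indep E (S2 - A2)"
        "card A1 = j" "card A2 = k - j" by (auto simp: QS_def)
      have "S1 \<union> S2 - (A1 \<union> A2) = (S1 - A1) \<union> (S2 - A2)" using a dis by blast
      moreover have "indep E ((S1 - A1) \<union> (S2 - A2))" using indep_un[of "S1 - A1" "S2 - A2"] a by blast
      moreover have "card (A1 \<union> A2) = k"
        using a j dis f1 f2 by (subst card_Un_disjoint) (auto intro: finite_subset)
      ultimately show "A1 \<union> A2 \<in> QS (S1 \<union> S2) E k"
        using a indep_un[of A1 A2] by (auto simp: QS_def)
    qed
  qed
  then have "Q (S1 \<union> S2) E k = card X" unfolding Q_def by (rule bij_betw_same_card)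
  then show "Q (S1 \<union> S2) E k = conv (Q S1 E) (Q S2 E) k" using cardX by (simp add: conv_def)
qed

lemma Q_gt: "finite S \<Longrightarrow> card S < k \<Longrightarrow> Q S E k = 0"
proof -
  assume "finite S" "card S < k"
  then have "QS S E k = {}" by (auto simp: QS_def dest: card_mono)
  then show ?thesis by (simp add: Q_def)
qed

lemma Q_sym:
  assumes "finite S" "k \<le> card S"
  shows "Q S E (card S - k) = Q S E k"
proof -
  have "bij_betw (\<lambda>A. S - A) (QS S E k) (QS S E (card S - k))"
  proof (rule bij_betw_byWitness[where f' = "\<lambda>A. S - A"])
    show "\<forall>a\<in>QS S E k. S - (S - a) = a" by (auto simp: QS_def)
    show "\<forall>a\<in>QS S E (card S - k). S - (S - a) = a" by (auto simp: QS_def)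
    show "(-) S ` QS S E k \<subseteq> QS S E (card S - k)"
      using assms by (auto simp: QS_def card_Diff_subset finite_subset Diff_Diff_Int Int_absorb1)
    show "(-) S ` QS S E (card S - k) \<subseteq> QS S E k"
      using assms by (auto simp: QS_def card_Diff_subset finite_subset Diff_Diff_Int Int_absorb1)
  qed
  then show ?thesis unfolding Q_def by (simp add: bij_betw_same_card)
qed

lemma Q_SU_iff:
  assumes fin: "finite S" and ne: "S \<noteq> {}"
  shows "chrom_two_s_positive S E \<longleftrightarrow> SU (card S) (Q S E)"
  unfolding chrom_pos_iff[OF fin ne] SU_def
  using Q_gt[OF fin] Q_sym[OF fin] by auto

lemma Q_empty: "Q {} E k = (if k = 0 then 1 else 0)"
proof -
  have "QS {} E k = (if k = 0 then {{}} else {})" by (auto simp: QS_def indep_def)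
  then show ?thesis by (simp add: Q_def)
qed

lemma SU_Q_empty: "SU 0 (Q {} E)"
  by (simp add: SU_def Q_empty)

lemma Q_single:
  assumes "\<not> E x x"
  shows "Q {x} E k = (if k \<le> 1 then 1 else 0)"
proof -
  have "QS {x} E k = (if k = 0 then {{}} else if k = 1 then {{x}} else {})"
    using assms by (auto simp: QS_def indep_def card_Suc_eq subset_singleton_iff)
  then show ?thesis by (simp add: Q_def)
qed

lemma conv_single:
  assumes q: "\<And>j. 2 \<le> j \<Longrightarrow> q j = 0"
  shows "conv q p k = q 0 * p k + (if 1 \<le> k then q 1 * p (k - 1) else 0)"
proof (cases k)
  case 0 then show ?thesis by (simp add: conv_def)
next
  case (Suc k')
  have "conv q p k = (\<Sum>j\<in>{0, 1}. q j * p (k - j))"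
    unfolding conv_def using Suc q by (intro sum.mono_neutral_right) auto
  then show ?thesis using Suc by simp
qed

section \<open>Reachability and components\<close>

definition closed :: "'a set \<Rightarrow> ('a \<Rightarrow> 'a \<Rightarrow> bool) \<Rightarrow> 'a set \<Rightarrow> bool" where
  "closed W E S \<longleftrightarrow> S \<subseteq> W \<and> (\<forall>u\<in>S. \<forall>v\<in>W. E u v \<longrightarrow> v \<in> S)"

lemma reach_in: "reachable W E x y \<Longrightarrow> x \<in> W \<Longrightarrow> y \<in> W"
  unfolding reachable_def by (induction rule: rtranclp_induct) auto

lemma reach_closed:
  assumes S: "closed W E S" and x: "x \<in> S" and r: "reachable W E x y"
  shows "y \<in> S"
  using r unfolding reachable_def
proof (induction rule: rtranclp_induct)
  case base then show ?case using x by simp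
next
  case (step y z) then show ?case using S unfolding closed_def by blast
qed

lemma reach_sym:
  assumes sym: "\<forall>u\<in>W. \<forall>v\<in>W. E u v \<longrightarrow> E v u"
  shows "reachable W E x y \<Longrightarrow> reachable W E y x"
  unfolding reachable_def
proof (induction rule: rtranclp_induct)
  case base then show ?case by simp
next
  case (step y z)
  then show ?case using sym by (metis (mono_tags, lifting) converse_rtranclp_into_rtranclp)
qed

lemma reach_trans: "reachable W E x y \<Longrightarrow> reachable W E y z \<Longrightarrow> reachable W E x z"
  unfolding reachable_def by (rule rtranclp_trans)

lemma reach_step: "reachable W E x y \<Longrightarrow> y \<in> W \<Longrightarrow> z \<in> W \<Longrightarrow> E y z \<Longrightarrow> reachable W E x z"
  unfolding reachable_def by (rule rtranclp.rtrancl_into_rtrancl) auto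

lemma reach_refl: "reachable W E x x"
  unfolding reachable_def by simp

lemma comp_closed:
  assumes "x0 \<in> W"
  shows "closed W E {y\<in>W. reachable W E x0 y}"
  unfolding closed_def using reach_step by fastforce

lemma closed_diff:
  assumes sym: "\<forall>u\<in>W. \<forall>v\<in>W. E u v \<longrightarrow> E v u"
    and S: "closed W E S" and D: "closed W E D" and sub: "D \<subseteq> S"
  shows "closed W E (S - D)"
  unfolding closed_def
proof (intro conjI ballI impI)
  show "S - D \<subseteq> W" using S by (auto simp: closed_def)
  fix u v assume u: "u \<in> S - D" and v: "v \<in> W" and e: "E u v"
  have uW: "u \<in> W" using u S by (auto simp: closed_def)
  have "v \<in> S" using S u v e by (auto simp: closed_def)
  moreover have "v \<notin> D"
  proof
    assume "v \<in> D"
    then have "u \<in> D" using D sym uW v e by (auto simp: closed_def)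
    then show False using u by simp
  qed
  ultimately show "v \<in> S - D" by simp
qed

lemma closed_noedge:
  assumes sym: "\<forall>u\<in>W. \<forall>v\<in>W. E u v \<longrightarrow> E v u"
    and D: "closed W E D" and u: "u \<in> D" and w: "w \<in> W - D"
  shows "\<not> E u w \<and> \<not> E w u"
  using assms unfolding closed_def by blast

lemma closed_SU:
  assumes sym: "\<forall>u\<in>W. \<forall>v\<in>W. E u v \<longrightarrow> E v u" and finW: "finite W"
    and H: "\<forall>D. is_component W E D \<and> D \<noteq> T \<longrightarrow> chrom_two_s_positive D E"
  shows "closed W E S \<Longrightarrow> S \<inter> T = {} \<Longrightarrow> SU (card S) (Q S E)"
proof (induction "card S" arbitrary: S rule: less_induct)
  case less
  have finS: "finite S" using less(2) finW by (auto simp: closed_def intro: finite_subset)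
  show ?case
  proof (cases "S = {}")
    case True then show ?thesis using SU_Q_empty by simp
  next
    case False
    then obtain v where v: "v \<in> S" by blast
    have vW: "v \<in> W" using v less(2) by (auto simp: closed_def)
    define D where "D = {y\<in>W. reachable W E v y}"
    have Dc: "closed W E D" unfolding D_def by (rule comp_closed[OF vW])
    have DS: "D \<subseteq> S" using reach_closed[OF less(2) v] by (auto simp: D_def)
    have vD: "v \<in> D" using vW reach_refl by (simp add: D_def)
    have Dcomp: "is_component W E D" unfolding is_component_def D_def using vW by blast
    have DT: "D \<noteq> T" using vD v less(3) by auto
    have finD: "finite D" using DS finS finite_subset by blast
    have SUD: "SU (card D) (Q D E)" using H Dcomp DT Q_SU_iff[OF finD] vD by blast
    have SDc: "closed W E (S - D)" by (rule closed_diff[OF sym less(2) Dc DS])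
    have card_lt: "card (S - D) < card S"
      by (rule psubset_card_mono) (use finS vD v in auto)
    have SUR: "SU (card (S - D)) (Q (S - D) E)"
      using less(1)[OF card_lt SDc] less(3) by blast
    have SDW: "S - D \<subseteq> W - D" using less(2) by (auto simp: closed_def)
    have "Q (D \<union> (S - D)) E = conv (Q D E) (Q (S - D) E)"
      by (rule Q_union) (use finD finS DS SDW closed_noedge[OF sym Dc] in auto)
    moreover have "D \<union> (S - D) = S" using DS by blast
    moreover have "card S = card D + card (S - D)" using DS finS
      by (metis card_Diff_subset finite_subset le_add_diff_inverse card_mono)
    ultimately show ?thesis using conv_SU[OF SUD SUR] by simp
  qed
qed


section \<open>Bipartite component\<close>

lemma bip_QS:
  assumes sym: "\<forall>u\<in>W. \<forall>v\<in>W. E u v \<longrightarrow> E v u" and x0: "x0 \<in> W"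
    and T: "T = {y\<in>W. reachable W E x0 y}" and bip: "bipartite_classes T E A B"
    and X: "X \<in> QS T E k"
  shows "X = A \<or> X = B"
proof -
  have XT: "X \<subseteq> T" "indep E X" "indep E (T - X)" using X by (auto simp: QS_def)
  have AB: "A \<union> B = T" "A \<inter> B = {}" "indep E A" "indep E B"
    using bip by (auto simp: bipartite_classes_def indep_def)
  have BT: "B = T - A" using AB by blast
  have claim: "((y \<in> X) = (x0 \<in> X)) = ((y \<in> A) = (x0 \<in> A))" if r: "reachable W E x0 y" for y
    using r unfolding reachable_def
  proof (induction rule: rtranclp_induct)
    case base then show ?case by simp
  next
    case (step y z)
    have ry: "reachable W E x0 y" using step(1) unfolding reachable_def .
    have yT: "y \<in> T" using ry reach_in[OF ry x0] T by simp
    have zT: "z \<in> T" using reach_step[OF ry] step(2) T by simp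
    have e: "E y z" using step(2) by simp
    have fX: "(z \<in> X) = (y \<notin> X)"
    proof
      assume "z \<in> X" then show "y \<notin> X" using XT(2) e unfolding indep_def by blast
    next
      assume "y \<notin> X"
      then have "y \<in> T - X" using yT by simp
      then have "z \<notin> T - X" using XT(3) e unfolding indep_def by blast
      then show "z \<in> X" using zT by simp
    qed
    have fA: "(z \<in> A) = (y \<notin> A)"
    proof
      assume "z \<in> A" then show "y \<notin> A" using AB(3) e unfolding indep_def by blast
    next
      assume "y \<notin> A"
      then have "y \<in> B" using yT BT by simp
      then have "z \<notin> B" using AB(4) e unfolding indep_def by blast
      then show "z \<in> A" using zT BT by simp
    qed
    show ?case using step(3) fX fA by blast
  qed
  show ?thesis
  proof (cases "(x0 \<in> X) = (x0 \<in> A)")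
    case True
    have "y \<in> X \<longleftrightarrow> y \<in> A" if "y \<in> T" for y using claim[of y] that True T by auto
    then have "X = A" using XT(1) AB(1) by blast
    then show ?thesis by simp
  next
    case False
    have "y \<in> X \<longleftrightarrow> y \<in> B" if "y \<in> T" for y using claim[of y] that False T BT by auto
    then have "X = B" using XT(1) AB(1) by blast
    then show ?thesis by simp
  qed
qed

lemma Q_bip:
  assumes sym: "\<forall>u\<in>W. \<forall>v\<in>W. E u v \<longrightarrow> E v u" and x0: "x0 \<in> W"
    and T: "T = {y\<in>W. reachable W E x0 y}" and bip: "bipartite_classes T E A B"
    and cA: "card A = r + 2" and cB: "card B = r"
  shows "Q T E k = (if k = r then 1 else 0) + (if k = r + 2 then 1 else 0)"
proof -
  have AB: "A \<union> B = T" "A \<inter> B = {}" "indep E A" "indep E B"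
    using bip by (auto simp: bipartite_classes_def indep_def)
  have BT: "B = T - A" "A = T - B" using AB by blast+
  have "QS T E k = {Y \<in> {A, B}. card Y = k}"
  proof (intro set_eqI iffI)
    fix X assume "X \<in> QS T E k"
    then show "X \<in> {Y \<in> {A, B}. card Y = k}"
      using bip_QS[OF sym x0 T bip] by (auto simp: QS_def)
  next
    fix X assume "X \<in> {Y \<in> {A, B}. card Y = k}"
    then have X: "X = A \<or> X = B" "card X = k" by auto
    have d: "T - A = B" "T - B = A" using AB by blast+
    have "A \<in> QS T E (card A)" "B \<in> QS T E (card B)"
      unfolding QS_def using AB d by auto
    then show "X \<in> QS T E k" using X by auto
  qed
  moreover have "{Y \<in> {A, B}. card Y = k} = (if k = r then {B} else {}) \<union> (if k = r + 2 then {A} else {})"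
    using cA cB by auto
  ultimately have "Q T E k = card ((if k = r then {B} else {}) \<union> (if k = r + 2 then {A} else {}))"
    by (simp add: Q_def)
  then show ?thesis by (cases "k = r"; cases "k = r + 2") auto
qed

section \<open>Clan graphs\<close>

lemma finite_clan:
  assumes "finite V"
  shows "finite (clan_vertices V \<alpha>)"
proof -
  have "clan_vertices V \<alpha> = (\<Union>v\<in>V. {v} \<times> {..<\<alpha> v})" by (auto simp: clan_vertices_def)
  then show ?thesis using assms by simp
qed

lemma sym_clan:
  assumes "simple_graph V E"
  shows "\<forall>u\<in>clan_vertices V \<alpha>. \<forall>v\<in>clan_vertices V \<alpha>. clan_edges E u v \<longrightarrow> clan_edges E v u"
  using assms by (auto simp: clan_vertices_def clan_edges_def simple_graph_def)

theorem mainTheorem14: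
  fixes V :: "'a set" and E :: "'a \<Rightarrow> 'a \<Rightarrow> bool" and \<alpha> :: "'a \<Rightarrow> nat"
    and T :: "('a \<times> nat) set" and r :: nat
  assumes "forest V E"
    and "\<not> chrom_two_s_positive (clan_vertices V \<alpha>) (clan_edges E)"
    and "is_component (clan_vertices V \<alpha>) (clan_edges E) T"
    and "\<not> chrom_two_s_positive T (clan_edges E)"
    and "\<forall>D. is_component (clan_vertices V \<alpha>) (clan_edges E) D \<and> D \<noteq> T
            \<longrightarrow> chrom_two_s_positive D (clan_edges E)"
    and "r \<ge> 1"
    and "\<exists>A B. bipartite_classes T (clan_edges E) A B \<and> card A = r + 2 \<and> card B = r"
  shows "\<not> (\<exists>x. isolated_vertex (clan_vertices V \<alpha>) (clan_edges E) x)"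
proof
  assume "\<exists>x. isolated_vertex (clan_vertices V \<alpha>) (clan_edges E) x"
  then obtain x where x: "isolated_vertex (clan_vertices V \<alpha>) (clan_edges E) x" by blast
  define W where "W = clan_vertices V \<alpha>"
  define E' where "E' = clan_edges E"
  have sg: "simple_graph V E" using assms(1) by (simp add: forest_def)
  have finW: "finite W" unfolding W_def using sg finite_clan by (auto simp: simple_graph_def)
  have sym: "\<forall>u\<in>W. \<forall>v\<in>W. E' u v \<longrightarrow> E' v u" unfolding W_def E'_def by (rule sym_clan[OF sg])
  have xW: "x \<in> W" and xiso: "\<And>u. u \<in> W \<Longrightarrow> \<not> E' x u"
    using x by (auto simp: isolated_vertex_def W_def E'_def)
  have xiso2: "\<And>u. u \<in> W \<Longrightarrow> \<not> E' u x" using xiso sym xW by blast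
  obtain x0 where x0: "x0 \<in> W" "T = {y\<in>W. reachable W E' x0 y}"
    using assms(3) unfolding is_component_def W_def E'_def by blast
  obtain A B where AB: "bipartite_classes T E' A B" "card A = r + 2" "card B = r"
    using assms(7) unfolding E'_def by blast
  have TW: "T \<subseteq> W" using x0 by blast
  have finT: "finite T" using TW finW finite_subset by blast
  have cardT: "card T = 2 * r + 2"
  proof -
    have "A \<union> B = T" "A \<inter> B = {}" using AB(1) by (auto simp: bipartite_classes_def)
    moreover have "finite A" "finite B" using finT \<open>A \<union> B = T\<close> by (auto intro: finite_subset)
    ultimately show ?thesis using AB(2,3) card_Un_disjoint by fastforce
  qed
  have Tc: "closed W E' T" using comp_closed[OF x0(1)] x0(2) by simp
  have xT: "x \<notin> T"
  proof
    assume "x \<in> T"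
    then have rx: "reachable W E' x0 x" using x0 by simp
    have "y = x" if "y \<in> T" for y
    proof -
      have "reachable W E' x y"
        using reach_trans[OF reach_sym[OF sym rx]] that x0 by simp
      then show "y = x" unfolding reachable_def
        by (cases rule: converse_rtranclpE) (use xiso in auto)
    qed
    then have "T \<subseteq> {x}" by blast
    then have "card T \<le> card {x}" by (intro card_mono) auto
    then have "card T \<le> 1" by simp
    then show False using cardT by simp
  qed
  have xc: "closed W E' {x}" using xW xiso by (auto simp: closed_def)
  have Wc: "closed W E' W" by (simp add: closed_def)
  have WTc: "closed W E' (W - T)" by (rule closed_diff[OF sym Wc Tc TW])
  define S where "S = W - T - {x}"
  have Sc: "closed W E' S" unfolding S_def by (rule closed_diff[OF sym WTc xc]) (use xW xT in auto)
  have SU_S: "SU (card S) (Q S E')"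
    using closed_SU[OF sym finW, of T S] assms(5) Sc unfolding W_def E'_def S_def by blast
  have QT: "Q T E' k = (if k = r then 1 else 0) + (if k = r + 2 then 1 else 0)" for k
    by (rule Q_bip[OF sym x0 AB])
  have Qx: "Q {x} E' k = (if k \<le> 1 then 1 else 0)" for k by (rule Q_single) (use xiso xW in auto)
  have QxT: "Q ({x} \<union> T) E' = conv (Q {x} E') (Q T E')"
    by (rule Q_union) (use finT xT TW xiso xiso2 in auto)
  have QxT2: "Q ({x} \<union> T) E' = ind (2 * r + 3) r"
  proof
    fix k
    have "conv (Q {x} E') (Q T E') k = Q T E' k + (if 1 \<le> k then Q T E' (k - 1) else 0)"
      using conv_single[of "Q {x} E'" "Q T E'" k] Qx by simp
    also have "\<dots> = ind (2 * r + 3) r k" unfolding QT ind_def using assms(6) by auto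
    finally show "Q ({x} \<union> T) E' k = ind (2 * r + 3) r k" using QxT by simp
  qed
  have SU1: "SU (card ({x} \<union> T)) (Q ({x} \<union> T) E')"
  proof -
    have c: "card ({x} \<union> T) = 2 * r + 3" using cardT xT finT by simp
    have "SU (2 * r + 3) (ind (2 * r + 3) r)" by (rule SU_ind) simp
    then show ?thesis using c QxT2 by (simp only:)
  qed
  have xTc: "closed W E' ({x} \<union> T)" using xc Tc by (auto simp: closed_def)
  have WU: "W = ({x} \<union> T) \<union> S" using TW xW by (auto simp: S_def)
  have finS: "finite S" using finW by (simp add: S_def)
  have QW: "Q W E' = conv (Q ({x} \<union> T) E') (Q S E')"
    unfolding WU
    by (rule Q_union) (use finT finS closed_noedge[OF sym xTc] in \<open>auto simp: S_def\<close>)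
  have cW: "card W = card ({x} \<union> T) + card S"
    unfolding WU by (rule card_Un_disjoint) (use finT finS in \<open>auto simp: S_def\<close>)
  have "SU (card W) (Q W E')" unfolding QW cW by (rule conv_SU[OF SU1 SU_S])
  then have "chrom_two_s_positive W E'" using Q_SU_iff[OF finW] xW by blast
  then show False using assms(2) unfolding W_def E'_def by simp
qed

end
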